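(* Let $\alpha,\beta,\gamma>-1$ and $|\delta|>1$. For all integers $0\le k\le n$ and $0\le\ell\le m$, $$\int_{\widetilde D_y}\int_{\widetilde D_x}\mathcal{J}_{n,k}(x,y)\,\mathcal{J}_{m,\ell}(x,y)\,\widetilde W(x,y)\,\mathrm{d}x\,\mathrm{d}y=\widetilde H_{nk}\,\delta_{k\ell}\,\delta_{nm},$$ where $$\widetilde W(x,y)=\theta(\delta xy)\,|y|^{\gamma+\beta}(1+y)\Big(1+\frac{x}{y}\Big)\Big(\frac{\delta-x}{y}\Big)(y^2-1)^{\frac{\alpha-1}{2}}\Big(\frac{x^2}{y^2}-1\Big)^{\frac{\gamma-1}{2}}\Big(\frac{\delta^2-x^2}{y^2}\Big)^{\frac{\beta-1}{2}},$$ $\theta$ is the sign function, $\widetilde D_x=[-|\delta|,-|y|]\cup[|y|,|\delta|]$ (for fixed $y$), $\widetilde D_y=[-|\delta|,-1]\cup[1,|\delta|]$, and $$\widetilde H_{nk}=(-1)^k\theta(\delta)\,\frac{(\delta^2-1)^{\frac{2k+\alpha+\beta+\gamma+3}{2}}}{1+(-1)^k\delta}\;\widetilde h_k(\gamma,\beta)\,\widetilde h_{n-k}(\alpha,2k+\beta+\gamma+1),$$ with $$\widetilde h_{n}(a,b)=\begin{cases}\dfrac{2\,\Gamma\big(\frac{n+b+1}{2}\big)\Gamma\big(\frac{n+a+3}{2}\big)\big(\frac n2\big)!}{(n+a+1)\,\Gamma\big(\frac{n+a+b+2}{2}\big)\big(\frac{a+1}{2}\big)_{n/2}^2}, & n\text{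 even},\\[3mm] \dfrac{(n+a+b+1)\,\Gamma\big(\frac{n+b+2}{2}\big)\Gamma\big(\frac{n+a+2}{2}\big)\big(\frac{n-1}{2}\big)!}{2\,\Gamma\big(\frac{n+a+b+3}{2}\big)\big(\frac{a+1}{2}\big)_{(n+1)/2}^2}, & n\text{ odd}.\end{cases}$$
   Context: For real $a,b$ and $c$ with $c^2\neq 1$, the (univariate) Big $-1$ Jacobi polynomials are $$J_{n}(x;a,b,c)=\begin{cases}{}_2F_1\!\left(\begin{smallmatrix}-\frac n2,\ \frac{n+a+b+2}{2}\\ \frac{a+1}{2}\end{smallmatrix};\frac{1-x^2}{1-c^2}\right)+\frac{n(1-x)}{(1+c)(a+1)}\,{}_2F_1\!\left(\begin{smallmatrix}1-\frac n2,\ \frac{n+a+b+2}{2}\\ \frac{a+3}{2}\end{smallmatrix};\frac{1-x^2}{1-c^2}\right), & n\text{ even},\\[2mm] {}_2F_1\!\left(\begin{smallmatrix}-\frac{n-1}2,\ \frac{n+a+b+1}{2}\\ \frac{a+1}{2}\end{smallmatrix};\frac{1-x^2}{1-c^2}\right)-\frac{(n+a+b+1)(1-x)}{(1+c)(a+1)}\,{}_2F_1\!\left(\begin{smallmatrix}-\frac{n-1}2,\ \frac{n+a+b+3}{2}\\ \frac{a+3}{2}\end{smallmatrix};\frac{1-x^2}{1-c^2}\right), & n\text{ odd},\end{cases}$$ where ${}_2F_1$ is the Gauss hypergeometric series (terminating here). Let $\rho_k(y)=y^k(1-\delta^2/y^2)^{k/2}$ if $k$ is even and $\rho_k(y)=y^k(1-\delta^2/y^2)^{(k-1)/2}(1+\delta/y)$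 if $k$ is odd. The two-variable Big $-1$ Jacobi polynomials are, for $k=0,1,2,\dots$ and $n=k,k+1,\dots$, $$\mathcal{J}_{n,k}(x,y)=J_{n-k}\big(y;\alpha,2k+\beta+\gamma+1,(-1)^k\delta\big)\,\rho_k(y)\,J_k\Big(\frac{x}{y};\gamma,\beta,\frac{\delta}{y}\Big),$$ a polynomial in $x,y$ (parameters $\alpha,\beta,\gamma$ real, $\delta\neq\pm1$). (The paper prints $\widetilde D_y=[-|\delta|,1]\cup[1,|\delta|]$; the intended set, used here, is $[-|\delta|,-1]\cup[1,|\delta|]$.) *)

theory Defs
  imports "HOL-Analysis.Analysis"
begin

text \<open>Gauss hypergeometric series 2F1(a,b;c;z) as the (formal) infinite series.
  In all uses below it terminates (or is multiplied by 0).\<close>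
definition hyp2F1 :: "real \<Rightarrow> real \<Rightarrow> real \<Rightarrow> real \<Rightarrow> real" where
  "hyp2F1 a b c z = (\<Sum>j. pochhammer a j * pochhammer b j / (pochhammer c j * fact j) * z ^ j)"

definition bigJ :: "nat \<Rightarrow> real \<Rightarrow> real \<Rightarrow> real \<Rightarrow> real \<Rightarrow> real" where
  "bigJ n x a b c =
    (let z = (1 - x\<^sup>2) / (1 - c\<^sup>2) in
     if even n then
       hyp2F1 (- real n / 2) ((real n + a + b + 2) / 2) ((a + 1) / 2) z
       + real n * (1 - x) / ((1 + c) * (a + 1))
         * hyp2F1 (1 - real n / 2) ((real n + a + b + 2) / 2) ((a + 3) / 2) z
     else
       hyp2F1 (- (real n - 1) / 2) ((real n + a + b + 1) / 2) ((a + 1) / 2) z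
       - (real n + a + b + 1) * (1 - x) / ((1 + c) * (a + 1))
         * hyp2F1 (- (real n - 1) / 2) ((real n + a + b + 3) / 2) ((a + 3) / 2) z)"

definition rho :: "real \<Rightarrow> nat \<Rightarrow> real \<Rightarrow> real" where
  "rho \<delta> k y =
    (if even k then y ^ k * (1 - \<delta>\<^sup>2 / y\<^sup>2) ^ (k div 2)
     else y ^ k * (1 - \<delta>\<^sup>2 / y\<^sup>2) ^ ((k - 1) div 2) * (1 + \<delta> / y))"

definition bigJ2 :: "real \<Rightarrow> real \<Rightarrow> real \<Rightarrow> real \<Rightarrow> nat \<Rightarrow> nat \<Rightarrow> real \<Rightarrow> real \<Rightarrow> real" where
  "bigJ2 \<alpha> \<beta> \<gamma> \<delta> n k x y =
     bigJ (n - k) y \<alpha> (2 * real k + \<beta> + \<gamma> + 1) ((-1) ^ k * \<delta>)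
     * rho \<delta> k y * bigJ k (x / y) \<gamma> \<beta> (\<delta> / y)"

definition weightW :: "real \<Rightarrow> real \<Rightarrow> real \<Rightarrow> real \<Rightarrow> real \<Rightarrow> real \<Rightarrow> real" where
  "weightW \<alpha> \<beta> \<gamma> \<delta> x y =
     sgn (\<delta> * x * y) * \<bar>y\<bar> powr (\<gamma> + \<beta>) * (1 + y) * (1 + x / y) * ((\<delta> - x) / y)
     * (y\<^sup>2 - 1) powr ((\<alpha> - 1) / 2)
     * (x\<^sup>2 / y\<^sup>2 - 1) powr ((\<gamma> - 1) / 2)
     * ((\<delta>\<^sup>2 - x\<^sup>2) / y\<^sup>2) powr ((\<beta> - 1) / 2)"

definition htilde :: "nat \<Rightarrow> real \<Rightarrow> real \<Rightarrow> real" where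
  "htilde n a b =
    (if even n then
       2 * Gamma ((real n + b + 1) / 2) * Gamma ((real n + a + 3) / 2) * fact (n div 2)
       / ((real n + a + 1) * Gamma ((real n + a + b + 2) / 2)
          * (pochhammer ((a + 1) / 2) (n div 2))\<^sup>2)
     else
       (real n + a + b + 1) * Gamma ((real n + b + 2) / 2) * Gamma ((real n + a + 2) / 2)
         * fact ((n - 1) div 2)
       / (2 * Gamma ((real n + a + b + 3) / 2) * (pochhammer ((a + 1) / 2) ((n + 1) div 2))\<^sup>2))"

definition Htilde :: "real \<Rightarrow> real \<Rightarrow> real \<Rightarrow> real \<Rightarrow> nat \<Rightarrow> nat \<Rightarrow> real" where
  "Htilde \<alpha> \<beta> \<gamma> \<delta> n k =
     (-1) ^ k * sgn \<delta>
     * (\<delta>\<^sup>2 - 1) powr ((2 * real k + \<alpha> + \<beta> + \<gamma> + 3) / 2) / (1 + (-1) ^ k * \<delta>)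
     * htilde k \<gamma> \<beta> * htilde (n - k) \<alpha> (2 * real k + \<beta> + \<gamma> + 1)"

definition Dx :: "real \<Rightarrow> real \<Rightarrow> real set" where
  "Dx \<delta> y = {- \<bar>\<delta>\<bar> .. - \<bar>y\<bar>} \<union> {\<bar>y\<bar> .. \<bar>\<delta>\<bar>}"

definition Dy :: "real \<Rightarrow> real set" where
  "Dy \<delta> = {- \<bar>\<delta>\<bar> .. -1} \<union> {1 .. \<bar>\<delta>\<bar>}"

end

theory Submission
  imports Defs "HOL-Computational_Algebra.Polynomial"
begin


lemma deg_shift_diff_less:
  fixes p :: "real poly"
  assumes "degree p > 0"
  shows "degree (p - pcompose p [:1,1:]) < degree p"
proof -
  let ?q = "pcompose p [:1,1:]"
  have dq: "degree ?q = degree p" by (simp add: degree_pcompose)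
  have lq: "lead_coeff ?q = lead_coeff p" by (simp add: lead_coeff_comp)
  have le: "degree (p - ?q) \<le> degree p" using degree_diff_le[of p "degree p" ?q] dq by simp
  have c0: "coeff (p - ?q) (degree p) = 0" using lq dq by simp
  show ?thesis
  proof (rule ccontr)
    assume "\<not> ?thesis"
    then have e: "degree (p - ?q) = degree p" using le by simp
    then have "p - ?q \<noteq> 0" using assms by auto
    then have "coeff (p - ?q) (degree (p - ?q)) \<noteq> 0" by (rule leading_coeff_neq_0)
    with e c0 show False by simp
  qed
qed

lemma fd_step:
  fixes f :: "nat \<Rightarrow> real"
  shows "(\<Sum>i\<le>Suc N. (-1)^i * real (Suc N choose i) * f i)
       = (\<Sum>i\<le>N. (-1)^i * real (N choose i) * (f i - f (Suc i)))"
proof -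
  have s1: "(\<Sum>i\<le>Suc N. (-1)^i * real (Suc N choose i) * f i)
      = f 0 + (\<Sum>i\<le>N. (-1)^(Suc i) * real (Suc N choose Suc i) * f (Suc i))"
    by (subst sum.atMost_Suc_shift) simp
  have s2: "(\<Sum>i\<le>N. (-1)^(Suc i) * real (Suc N choose Suc i) * f (Suc i))
     = (\<Sum>i\<le>N. (-1)^(Suc i) * real (N choose i) * f (Suc i))
                 + (\<Sum>i\<le>N. (-1)^(Suc i) * real (N choose Suc i) * f (Suc i))"
    unfolding sum.distrib[symmetric] by (intro sum.cong) (simp_all add: algebra_simps)
  have s3: "f 0 + (\<Sum>i\<le>N. (-1)^(Suc i) * real (N choose Suc i) * f (Suc i))
      = (\<Sum>i\<le>Suc N. (-1)^i * real (N choose i) * f i)"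
    by (subst sum.atMost_Suc_shift) simp
  have s4: "(\<Sum>i\<le>Suc N. (-1)^i * real (N choose i) * f i) = (\<Sum>i\<le>N. (-1)^i * real (N choose i) * f i)"
    by simp
  have s5: "(\<Sum>i\<le>N. (-1)^i * real (N choose i) * (f i - f (Suc i)))
     = (\<Sum>i\<le>N. (-1)^i * real (N choose i) * f i) + (\<Sum>i\<le>N. (-1)^(Suc i) * real (N choose i) * f (Suc i))"
    unfolding sum.distrib[symmetric] by (intro sum.cong) (simp_all add: algebra_simps)
  show ?thesis using s1 s2 s3 s4 s5 by simp
qed

lemma fd_zero:
  fixes p :: "real poly"
  assumes "degree p < N"
  shows "(\<Sum>i\<le>N. (-1)^i * real (N choose i) * poly p (real i)) = 0"
  using assms
proof (induction N arbitrary: p)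
  case 0 then show ?case by simp
next
  case (Suc N)
  let ?q = "p - pcompose p [:1,1:]"
  have "(\<Sum>i\<le>Suc N. (-1)^i * real (Suc N choose i) * poly p (real i))
       = (\<Sum>i\<le>N. (-1)^i * real (N choose i) * poly ?q (real i))"
    by (subst fd_step) (simp add: poly_pcompose algebra_simps)
  also have "\<dots> = 0"
  proof (cases "degree p = 0")
    case True
    then obtain c where "p = [:c:]" by (metis degree_eq_zeroE)
    then show ?thesis by (simp add: pcompose_pCons)
  next
    case False
    then have "degree ?q < degree p" by (intro deg_shift_diff_less) simp
    with Suc show ?thesis by (intro Suc.IH) simp
  qed
  finally show ?case .
qed

lemma fd_recip:
  fixes A :: real
  assumes "A > 0"
  shows "(\<Sum>i\<le>N. (-1)^i * real (N choose i) * (1 / (real i + A))) = fact N / pochhammer A (Suc N)"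
  using assms
proof (induction N arbitrary: A)
  case 0 then show ?case by simp
next
  case (Suc N)
  have "(\<Sum>i\<le>Suc N. (-1)^i * real (Suc N choose i) * (1 / (real i + A)))
     = (\<Sum>i\<le>N. (-1)^i * real (N choose i) * (1 / (real i + A) - 1 / (real (Suc i) + A)))"
    by (rule fd_step)
  also have "\<dots> = (\<Sum>i\<le>N. (-1)^i * real (N choose i) * (1 / (real i + A)))
                 - (\<Sum>i\<le>N. (-1)^i * real (N choose i) * (1 / (real i + (A + 1))))"
    by (simp add: sum_subtractf[symmetric] algebra_simps)
  also have "\<dots> = fact N / pochhammer A (Suc N) - fact N / pochhammer (A+1) (Suc N)"
    using Suc by simp
  also have "\<dots> = fact (Suc N) / pochhammer A (Suc (Suc N))"
  proof -
    have p1: "pochhammer A (Suc (Suc N)) = A * pochhammer (A+1) (Suc N)"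
      by (rule pochhammer_rec)
    have p2: "pochhammer A (Suc (Suc N)) = pochhammer A (Suc N) * (A + real (Suc N))"
      by (rule pochhammer_Suc)
    have n1: "pochhammer A (Suc N) > 0" "pochhammer (A+1) (Suc N) > 0"
      using Suc.prems by (auto intro: pochhammer_pos)
    have pp: "pochhammer A (Suc (Suc N)) > 0" using Suc.prems by (intro pochhammer_pos) simp
    have e1: "fact N / pochhammer A (Suc N) = fact N * (A + real (Suc N)) / pochhammer A (Suc (Suc N))"
      using n1 Suc.prems by (simp add: p2)
    have e2: "fact N / pochhammer (A+1) (Suc N) = fact N * A / pochhammer A (Suc (Suc N))"
      using n1 Suc.prems by (simp add: p1)
    show ?thesis unfolding e1 e2 using pp
      by (simp add: field_simps)
  qed
  finally show ?case .
qed

lemma poly_pochhammer_lin: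
  "poly (pochhammer [:x, 1:] j) y = pochhammer (x + y) (j::nat)"
  by (induction j) (simp_all add: pochhammer_Suc algebra_simps)

lemma degree_pochhammer_lin:
  "degree (pochhammer [:x::real, 1:] j) \<le> j"
proof (induction j)
  case 0 then show ?case by simp
next
  case (Suc j)
  have "degree (pochhammer [:x, 1:] j * ([:x,1:] + of_nat j)) \<le> degree (pochhammer [:x, 1:] j) + degree ([:x,1:] + of_nat j :: real poly)"
    by (rule degree_mult_le)
  moreover have "degree ([:x,1:] + of_nat j :: real poly) \<le> 1"
    by (simp add: of_nat_poly)
  ultimately show ?case using Suc by (simp add: pochhammer_Suc)
qed

lemma poch_neg_fact:
  "pochhammer (- real N) i / fact i = (-1)^i * real (N choose i)"
proof -
  have "real (N choose i) = (real N gchoose i)" by (rule binomial_gbinomial)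
  also have "\<dots> = (-1)^i * pochhammer (- real N) i / fact i" by (rule gbinomial_pochhammer)
  finally show ?thesis by simp
qed

lemma Beta_shift:
  fixes x y :: real
  assumes "x > 0" "y > 0"
  shows "Beta (x + real i) y = Beta x y * pochhammer x i / pochhammer (x + y) i"
proof (induction i)
  case 0 then show ?case by simp
next
  case (Suc i)
  have "x + real i > 0" using assms by simp
  then have nz: "x + real i \<notin> \<int>\<^sub>\<le>\<^sub>0" by (auto dest: nonpos_Ints_nonpos)
  have "(x + real i + y) * Beta (x + real i + 1) y = (x + real i) * Beta (x + real i) y"
    by (rule Beta_plus1_left[OF nz])
  moreover have "pochhammer (x+y) i > 0" using assms by (intro pochhammer_pos) simp
  moreover have "x + real i + y > 0" using assms by simp
  ultimately have "Beta (x + real (Suc i)) y = (x + real i) * Beta (x+real i) y / (x+real i+y)"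
    by (simp add: field_simps add_ac)
  also have "\<dots> = (x + real i) * (Beta x y * pochhammer x i / pochhammer (x + y) i) / (x+real i+y)"
    using Suc.IH by simp
  also have "\<dots> = Beta x y * pochhammer x (Suc i) / pochhammer (x + y) (Suc i)"
    by (simp add: pochhammer_Suc field_simps add_ac)
  finally show ?case .
qed



definition hcoef :: "nat \<Rightarrow> real \<Rightarrow> real \<Rightarrow> nat \<Rightarrow> real" where
  "hcoef N A B i = pochhammer (- real N) i * pochhammer A i / (pochhammer B i * fact i)"

definition hpoly :: "nat \<Rightarrow> real \<Rightarrow> real \<Rightarrow> real poly" where
  "hpoly N A B = (\<Sum>i\<le>N. monom (hcoef N A B i) i)"

lemma hcoef_zero: "i > N \<Longrightarrow> hcoef N A B i = 0"
  by (simp add: hcoef_def pochhammer_of_nat_eq_0_lemma)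

lemma coeff_hpoly: "coeff (hpoly N A B) i = hcoef N A B i"
  by (cases "i \<le> N") (auto simp: hpoly_def coeff_sum coeff_monom hcoef_zero)

lemma degree_hpoly: "degree (hpoly N A B) \<le> N"
  by (rule degree_le) (simp add: coeff_hpoly hcoef_zero)

definition Lf :: "real \<Rightarrow> real \<Rightarrow> real poly \<Rightarrow> real" where
  "Lf g s p = (\<Sum>i\<le>degree p. coeff p i * Beta (g + real i) s)"

lemma Lf_bound:
  assumes "degree p \<le> K"
  shows "Lf g s p = (\<Sum>i\<le>K. coeff p i * Beta (g + real i) s)"
  unfolding Lf_def using assms
  by (intro sum.mono_neutral_left) (auto simp: coeff_eq_0)

lemma Lf_add: "Lf g s (p + q) = Lf g s p + Lf g s q"
proof -
  let ?K = "max (degree p) (degree q)"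
  have "degree (p + q) \<le> ?K" by (rule degree_add_le) auto
  then show ?thesis
    by (simp add: Lf_bound[of "p+q" ?K] Lf_bound[of p ?K] Lf_bound[of q ?K] sum.distrib algebra_simps)
qed

lemma Lf_smult: "Lf g s (smult c p) = c * Lf g s p"
  by (simp add: Lf_bound[of "smult c p" "degree p"] Lf_bound[of p "degree p"] sum_distrib_left mult_ac)

lemma Lf_minus: "Lf g s (- p) = - Lf g s p"
  using Lf_smult[of g s "-1" p] by simp

lemma Lf_diff: "Lf g s (p - q) = Lf g s p - Lf g s q"
  using Lf_add[of g s p "-q"] Lf_minus[of g s q] by simp

lemma Lf_0 [simp]: "Lf g s 0 = 0"
  by (simp add: Lf_def)

lemma Lf_sum: "finite I \<Longrightarrow> Lf g s (\<Sum>i\<in>I. f i) = (\<Sum>i\<in>I. Lf g s (f i))"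
  by (induction I rule: finite_induct) (simp_all add: Lf_add)

lemma Lf_pCons0: "Lf g s (pCons 0 p) = Lf (g + 1) s p"
proof -
  have "degree (pCons 0 p) \<le> Suc (degree p)" by (simp add: degree_pCons_le)
  then have "Lf g s (pCons 0 p) = (\<Sum>i\<le>Suc (degree p). coeff (pCons 0 p) i * Beta (g + real i) s)"
    by (rule Lf_bound)
  also have "\<dots> = (\<Sum>i\<le>degree p. coeff p i * Beta (g + 1 + real i) s)"
    by (subst sum.atMost_Suc_shift) (simp add: add_ac)
  finally show ?thesis by (simp add: Lf_def)
qed

lemma Lf_x: "Lf g s ([:0,1:] * p) = Lf (g + 1) s p"
  by (simp add: Lf_pCons0)

lemma Lf_monom: "Lf g s (monom 1 j * p) = Lf (g + real j) s p"
proof (induction j arbitrary: g)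
  case 0 then show ?case by simp
next
  case (Suc j)
  have "monom (1::real) (Suc j) * p = [:0,1:] * (monom 1 j * p)"
    by (simp add: monom_Suc)
  then show ?case using Suc[of "g+1"] by (simp add: Lf_pCons0 add_ac)
qed

lemma Lf_1mx:
  assumes "g > 0" "s > 0"
  shows "Lf g s ([:1,-1:] * p) = Lf g (s + 1) p"
proof -
  have e: "[:1,-1:] * p = p - pCons 0 p" by simp
  have "Lf g s ([:1,-1:] * p) = Lf g s p - Lf (g+1) s p"
    unfolding Lf_diff[of g s p "pCons 0 p", symmetric] Lf_pCons0[symmetric] e by (rule refl)
  also have "\<dots> = (\<Sum>i\<le>degree p. coeff p i * (Beta (g + real i) s - Beta (g + real i + 1) s))"
    by (simp add: Lf_def sum_subtractf algebra_simps add_ac)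
  also have "\<dots> = Lf g (s+1) p"
    unfolding Lf_def
  proof (intro sum.cong refl)
    fix i
    have "g + real i > 0" using assms by simp
    then have n1: "g + real i \<notin> \<int>\<^sub>\<le>\<^sub>0" by (auto dest: nonpos_Ints_nonpos)
    have n2: "s \<notin> \<int>\<^sub>\<le>\<^sub>0" using assms by (auto dest: nonpos_Ints_nonpos)
    show "coeff p i * (Beta (g + real i) s - Beta (g + real i + 1) s) = coeff p i * Beta (g + real i) (s + 1)"
      using Beta_plus1_plus1[OF n1 n2] by simp
  qed
  finally show ?thesis .
qed

lemma Lf_hpoly:
  "Lf g s (hpoly N A B) = (\<Sum>i\<le>N. hcoef N A B i * Beta (g + real i) s)"
  by (simp add: Lf_bound[OF degree_hpoly] coeff_hpoly)

lemma fd_zero':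
  fixes p :: "real poly"
  assumes "degree p < N \<or> p = 0"
  shows "(\<Sum>i\<le>N. (-1)^i * real (N choose i) * poly p (real i)) = 0"
  using assms fd_zero by auto

lemma hcoef_split:
  "hcoef N A B i = (-1)^i * real (N choose i) * (pochhammer A i / pochhammer B i)"
  unfolding hcoef_def using poch_neg_fact[of N i]
  by (simp add: field_simps)

lemma orth_sum:
  fixes g s :: real
  assumes g: "g > 0" and s: "s > 0" and j: "j < N"
  shows "Lf g s (monom 1 j * hpoly N (real N + g + s - 1) g) = 0"
proof -
  define A where "A = real N + g + s - 1"
  define M where "M = N - 1 - j"
  have gj: "g + real j > 0" using g by simp
  have pg: "pochhammer g j > 0" using g by (intro pochhammer_pos)
  have pM: "pochhammer (g + s + real j) M > 0" using g s by (intro pochhammer_pos) simp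
  have "Lf g s (monom 1 j * hpoly N A g) = (\<Sum>i\<le>N. hcoef N A g i * Beta (g + real j + real i) s)"
    by (simp add: Lf_monom Lf_hpoly)
  also have "\<dots> = (\<Sum>i\<le>N. hcoef N A g i * (Beta (g + real j) s * pochhammer (g + real j) i / pochhammer (g + real j + s) i))"
    by (intro sum.cong refl) (simp add: Beta_shift[OF gj s])
  also have "\<dots> = (Beta (g + real j) s / (pochhammer g j * pochhammer (g + s + real j) M)) *
      (\<Sum>i\<le>N. (-1)^i * real (N choose i) * poly (pochhammer [:g,1:] j * pochhammer [:g + s + real j, 1:] M) (real i))"
    unfolding sum_distrib_left
  proof (intro sum.cong refl)
    fix i
    have pgi: "pochhammer g i > 0" using g by (intro pochhammer_pos)
    have pgsi: "pochhammer (g + real j + s) i > 0" using g s by (intro pochhammer_pos) simp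
    have e1: "pochhammer g i * pochhammer (g + real i) j = pochhammer g j * pochhammer (g + real j) i"
      using pochhammer_product'[of g i j] pochhammer_product'[of g j i] by (simp add: add.commute)
    have e2: "pochhammer (g + s + real j) i * pochhammer (g + s + real j + real i) M
              = pochhammer (g + s + real j) M * pochhammer A i"
    proof -
      have "pochhammer (g + s + real j) i * pochhammer (g + s + real j + real i) M = pochhammer (g + s + real j) (i + M)"
        by (simp add: pochhammer_product')
      also have "\<dots> = pochhammer (g + s + real j) (M + i)" by (simp add: add.commute)
      also have "\<dots> = pochhammer (g + s + real j) M * pochhammer (g + s + real j + real M) i"
        by (simp add: pochhammer_product')
      also have "g + s + real j + real M = A" unfolding A_def M_def using j by simp
      finally show ?thesis by simp
    qed
    show "hcoef N A g i * (Beta (g + real j) s * pochhammer (g + real j) i / pochhammer (g + real j + s) i)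
      = Beta (g + real j) s / (pochhammer g j * pochhammer (g + s + real j) M) *
        ((-1)^i * real (N choose i) * poly (pochhammer [:g,1:] j * pochhammer [:g + s + real j, 1:] M) (real i))"
      unfolding hcoef_split poly_mult poly_pochhammer_lin
      using pgi pgsi pg pM e1 e2
      by (simp add: field_simps add_ac)
  qed
  also have "(\<Sum>i\<le>N. (-1)^i * real (N choose i) * poly (pochhammer [:g,1:] j * pochhammer [:g + s + real j, 1:] M) (real i)) = 0"
  proof (rule fd_zero)
    have "degree (pochhammer [:g,1:] j * pochhammer [:g + s + real j, 1:] M) \<le> j + M"
      using degree_mult_le[of "pochhammer [:g,1:] j" "pochhammer [:g + s + real j, 1:] M"]
        degree_pochhammer_lin[of g j] degree_pochhammer_lin[of "g + s + real j" M] by linarith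
    then show "degree (pochhammer [:g,1:] j * pochhammer [:g + s + real j, 1:] M) < N"
      unfolding M_def using j by linarith
  qed
  finally show ?thesis unfolding A_def by simp
qed



lemma synth_div_eval:
  fixes Q :: "real poly"
  shows "poly Q x = poly Q c + (x - c) * poly (synthetic_div Q c) x"
proof -
  have "poly (Q + smult c (synthetic_div Q c)) x = poly (pCons (poly Q c) (synthetic_div Q c)) x"
    by (subst synthetic_div_correct) simp
  then show ?thesis by (simp add: algebra_simps)
qed

lemma norm_sum_pos:
  fixes g s :: real
  assumes g: "g > 0" and s: "s > 0" and N: "N > 0"
  shows "Lf g s (monom 1 N * hpoly N (real N + g + s - 1) g)
       = Beta (g + real N) s * (-1)^N * pochhammer s N * fact N / (pochhammer g N * pochhammer (real N + g + s) N)"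
proof -
  define A where "A = real N + g + s - 1"
  have A0: "A > 0" unfolding A_def using g s N by simp
  define Q where "Q = pochhammer [:g,1:] N"
  define R where "R = synthetic_div Q (- A)"
  have gN: "g + real N > 0" using g by simp
  have pg: "pochhammer g N > 0" using g by (intro pochhammer_pos)
  have "Lf g s (monom 1 N * hpoly N A g) = (\<Sum>i\<le>N. hcoef N A g i * Beta (g + real N + real i) s)"
    by (simp add: Lf_monom Lf_hpoly)
  also have "\<dots> = (\<Sum>i\<le>N. hcoef N A g i * (Beta (g + real N) s * pochhammer (g + real N) i / pochhammer (g + real N + s) i))"
    by (intro sum.cong refl) (simp add: Beta_shift[OF gN s])
  also have "\<dots> = (\<Sum>i\<le>N. Beta (g + real N) s * A / pochhammer g N * ((-1)^i * real (N choose i) * poly R (real i)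
         + poly Q (- A) * ((-1)^i * real (N choose i) * (1 / (real i + A)))))"
  proof (intro sum.cong refl)
    fix i
    have pgi: "pochhammer g i > 0" using g by (intro pochhammer_pos)
    have pA: "pochhammer (A + 1) i > 0" using A0 by (intro pochhammer_pos) simp
    have e1: "pochhammer g i * pochhammer (g + real i) N = pochhammer g N * pochhammer (g + real N) i"
      using pochhammer_product'[of g i N] pochhammer_product'[of g N i] by (simp add: add.commute)
    have e2: "pochhammer A i * (A + real i) = A * pochhammer (A + 1) i"
      using pochhammer_Suc[of A i] pochhammer_rec[of A i] by simp
    have e3: "poly Q (real i) = poly Q (-A) + (real i + A) * poly R (real i)"
      unfolding R_def using synth_div_eval[of Q "real i" "-A"] by simp
    have e4: "poly Q (real i) = pochhammer (g + real i) N"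
      unfolding Q_def by (simp add: poly_pochhammer_lin)
    have Ai: "real i + A > 0" using A0 by simp
    have gNs: "g + real N + s = A + 1" unfolding A_def by simp
    show "hcoef N A g i * (Beta (g + real N) s * pochhammer (g + real N) i / pochhammer (g + real N + s) i)
       = Beta (g + real N) s * A / pochhammer g N * ((-1)^i * real (N choose i) * poly R (real i)
         + poly Q (- A) * ((-1)^i * real (N choose i) * (1 / (real i + A))))"
    proof -
      have f1: "pochhammer (g + real N) i = pochhammer g i * poly Q (real i) / pochhammer g N"
        using e1 e4 pg by (simp add: field_simps)
      have f2: "pochhammer A i = A * pochhammer (A + 1) i / (A + real i)"
        using e2 Ai by (simp add: field_simps)
      have "hcoef N A g i * (Beta (g + real N) s * pochhammer (g + real N) i / pochhammer (g + real N + s) i)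
          = (-1)^i * real (N choose i) * Beta (g + real N) s * A / pochhammer g N * (poly Q (real i) / (real i + A))"
        unfolding hcoef_split gNs f1 f2 using pgi pA pg Ai
        by (simp add: divide_simps)
      also have "poly Q (real i) / (real i + A) = poly R (real i) + poly Q (-A) / (real i + A)"
        using e3 Ai by (simp add: field_simps)
      finally show ?thesis by (simp add: field_simps)
    qed
  qed
  also have "\<dots> = (Beta (g + real N) s * A / pochhammer g N) *
      ((\<Sum>i\<le>N. (-1)^i * real (N choose i) * poly R (real i))
       + poly Q (-A) * (\<Sum>i\<le>N. (-1)^i * real (N choose i) * (1 / (real i + A))))"
    by (simp only: sum_distrib_left sum.distrib distrib_left)
  also have "(\<Sum>i\<le>N. (-1)^i * real (N choose i) * poly R (real i)) = 0"
  proof (rule fd_zero')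
    have "degree Q \<le> N" unfolding Q_def by (rule degree_pochhammer_lin)
    then have "degree R \<le> N - 1" unfolding R_def by (simp add: degree_synthetic_div)
    moreover have "N = 0 \<Longrightarrow> R = 0"
    proof -
      assume "N = 0"
      then have "degree Q = 0" using \<open>degree Q \<le> N\<close> by simp
      then show "R = 0" unfolding R_def by (simp add: synthetic_div_eq_0_iff)
    qed
    ultimately show "degree R < N \<or> R = 0" by (cases N) auto
  qed
  also have "(\<Sum>i\<le>N. (-1)^i * real (N choose i) * (1 / (real i + A))) = fact N / pochhammer A (Suc N)"
    by (rule fd_recip[OF A0])
  also have "poly Q (-A) = (-1)^N * pochhammer s N"
  proof -
    have "poly Q (-A) = pochhammer (g - A) N" unfolding Q_def by (simp add: poly_pochhammer_lin)
    also have "g - A = - (s + real N - 1)" unfolding A_def by simp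
    also have "pochhammer (- (s + real N - 1)) N = (-1)^N * pochhammer s N"
      by (subst pochhammer_minus) simp
    finally show ?thesis .
  qed
  also have "pochhammer A (Suc N) = A * pochhammer (A + 1) N" by (rule pochhammer_rec)
  also have "A + 1 = real N + g + s" unfolding A_def by simp
  finally show ?thesis unfolding A_def[symmetric] using A0 pg
    by (simp add: field_simps)
qed

lemma norm_sum:
  fixes g s :: real
  assumes g: "g > 0" and s: "s > 0"
  shows "Lf g s (monom 1 N * hpoly N (real N + g + s - 1) g)
       = Beta (g + real N) s * (-1)^N * pochhammer s N * fact N / (pochhammer g N * pochhammer (real N + g + s) N)"
proof (cases "N = 0")
  case True
  then show ?thesis by (simp add: Lf_hpoly hcoef_def)
next
  case False
  then show ?thesis using norm_sum_pos[OF g s] by simp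
qed



lemma hcoef_0 [simp]: "hcoef N A B 0 = 1"
  by (simp add: hcoef_def)

lemma poch_negSuc: "pochhammer (- real (Suc M)) (Suc k) = - (real M + 1) * pochhammer (- real M) k"
  by (subst pochhammer_rec) (simp add: algebra_simps)

lemma contig_E1:
  assumes g: "g > 0"
  shows "hpoly N a g + smult (real N / g) (pCons 0 (hpoly (N - 1) a (g + 1))) = hpoly N (a - 1) g"
proof (rule poly_eqI)
  fix i
  show "coeff (hpoly N a g + smult (real N / g) (pCons 0 (hpoly (N - 1) a (g + 1)))) i = coeff (hpoly N (a - 1) g) i"
  proof (cases i)
    case 0 then show ?thesis by (simp add: coeff_hpoly)
  next
    case (Suc k)
    show ?thesis
    proof (cases N)
      case 0 then show ?thesis using Suc by (simp add: coeff_hpoly hcoef_def pochhammer_rec)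
    next
      case (Suc M)
      have G: "pochhammer (g+1) k > 0" using g by (intro pochhammer_pos) simp
      have F: "fact k > (0::real)" by simp
      have r1: "pochhammer g (Suc k) = g * pochhammer (g+1) k" by (rule pochhammer_rec)
      have r2: "pochhammer a (Suc k) = pochhammer a k * (a + real k)" by (rule pochhammer_Suc)
      have r3: "pochhammer (a - 1) (Suc k) = (a - 1) * pochhammer a k" by (subst pochhammer_rec) simp
      define kk where "kk = real k + 1"
      have kk: "kk \<noteq> 0" unfolding kk_def by simp
      have r4: "fact (Suc k) = kk * (fact k :: real)" unfolding kk_def by simp
      have "g \<noteq> 0" "pochhammer (g+1) k \<noteq> 0" "fact k \<noteq> (0::real)" using G g by auto
      then show ?thesis
        unfolding \<open>i = Suc k\<close> \<open>N = Suc M\<close> diff_Suc_1 coeff_add coeff_smult coeff_hpoly coeff_pCons_Suc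
        unfolding hcoef_def poch_negSuc r1 r2 r3 r4
        using kk by (simp add: field_simps) (simp add: kk_def algebra_simps)
    qed
  qed
qed

lemma contig_E2:
  assumes g: "g > 0"
  shows "hpoly N a g + smult (real N / g) (hpoly (N - 1) a (g + 1)) = smult ((g + real N) / g) (hpoly N a (g + 1))"
proof (rule poly_eqI)
  fix i
  show "coeff (hpoly N a g + smult (real N / g) (hpoly (N - 1) a (g + 1))) i = coeff (smult ((g + real N) / g) (hpoly N a (g + 1))) i"
  proof (cases i)
    case 0 then show ?thesis using g by (simp add: coeff_hpoly field_simps)
  next
    case (Suc k)
    show ?thesis
    proof (cases N)
      case 0 then show ?thesis using Suc by (simp add: coeff_hpoly hcoef_def pochhammer_rec)
    next
      case (Suc M)
      have G: "pochhammer (g+1) k > 0" using g by (intro pochhammer_pos) simp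
      have F: "fact k > (0::real)" by simp
      have gk: "g + 1 + real k > 0" using g by simp
      have r1: "pochhammer g (Suc k) = g * pochhammer (g+1) k" by (rule pochhammer_rec)
      have r2: "pochhammer a (Suc k) = pochhammer a k * (a + real k)" by (rule pochhammer_Suc)
      have r3: "pochhammer (- real M) (Suc k) = pochhammer (- real M) k * (- real M + real k)" by (rule pochhammer_Suc)
      define kk where "kk = real k + 1"
      define gq where "gq = g + 1 + real k"
      have kk: "kk \<noteq> 0" "gq \<noteq> 0" unfolding kk_def gq_def using g by auto
      have r4: "fact (Suc k) = kk * (fact k :: real)" unfolding kk_def by simp
      have r5: "pochhammer (g+1) (Suc k) = pochhammer (g+1) k * gq" unfolding gq_def by (rule pochhammer_Suc)
      have "g \<noteq> 0" "pochhammer (g+1) k \<noteq> 0" "fact k \<noteq> (0::real)" using G g by auto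
      then show ?thesis
        unfolding \<open>i = Suc k\<close> \<open>N = Suc M\<close> diff_Suc_1 coeff_add coeff_smult coeff_hpoly
        unfolding hcoef_def poch_negSuc r1 r2 r3 r4 r5
        using kk by (simp add: field_simps) (simp add: kk_def gq_def algebra_simps)
    qed
  qed
qed

lemma contig_O1:
  assumes g: "g > 0"
  shows "hpoly N a g - smult (a / g) (pCons 0 (hpoly N (a + 1) (g + 1))) = hpoly (Suc N) a g"
proof (rule poly_eqI)
  fix i
  show "coeff (hpoly N a g - smult (a / g) (pCons 0 (hpoly N (a + 1) (g + 1)))) i = coeff (hpoly (Suc N) a g) i"
  proof (cases i)
    case 0 then show ?thesis by (simp add: coeff_hpoly)
  next
    case (Suc k)
    have G: "pochhammer (g+1) k > 0" using g by (intro pochhammer_pos) simp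
    have F: "fact k > (0::real)" by simp
    have r1: "pochhammer g (Suc k) = g * pochhammer (g+1) k" by (rule pochhammer_rec)
    have r2: "pochhammer a (Suc k) = a * pochhammer (a + 1) k" by (rule pochhammer_rec)
    have r3: "pochhammer (- real N) (Suc k) = pochhammer (- real N) k * (- real N + real k)" by (rule pochhammer_Suc)
    define kk where "kk = real k + 1"
    have kk: "kk \<noteq> 0" unfolding kk_def by simp
    have r4: "fact (Suc k) = kk * (fact k :: real)" unfolding kk_def by simp
    have "g \<noteq> 0" "pochhammer (g+1) k \<noteq> 0" "fact k \<noteq> (0::real)" using G g by auto
    then show ?thesis
      unfolding \<open>i = Suc k\<close> coeff_diff coeff_smult coeff_hpoly coeff_pCons_Suc
      unfolding hcoef_def poch_negSuc r1 r2 r3 r4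
      using kk by (simp add: field_simps) (simp add: kk_def algebra_simps)
  qed
qed

lemma contig_O2:
  assumes g: "g > 0"
  shows "hpoly N a g - smult (a / g) (hpoly N (a + 1) (g + 1)) = smult ((g - a) / g) (hpoly N a (g + 1))"
proof (rule poly_eqI)
  fix i
  show "coeff (hpoly N a g - smult (a / g) (hpoly N (a + 1) (g + 1))) i = coeff (smult ((g - a) / g) (hpoly N a (g + 1))) i"
  proof (cases i)
    case 0 then show ?thesis using g by (simp add: coeff_hpoly field_simps)
  next
    case (Suc k)
    have G: "pochhammer (g+1) k > 0" using g by (intro pochhammer_pos) simp
    have F: "fact k > (0::real)" by simp
    have gk: "g + 1 + real k > 0" using g by simp
    have r1: "pochhammer g (Suc k) = g * pochhammer (g+1) k" by (rule pochhammer_rec)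
    have r2: "pochhammer a (Suc k) = a * pochhammer (a + 1) k" by (rule pochhammer_rec)
    have r3: "pochhammer (a + 1) (Suc k) = pochhammer (a + 1) k * (a + 1 + real k)" by (rule pochhammer_Suc)
    define kk where "kk = real k + 1"
    define gq where "gq = g + 1 + real k"
    have kk: "kk \<noteq> 0" "gq \<noteq> 0" unfolding kk_def gq_def using g by auto
    have r4: "fact (Suc k) = kk * (fact k :: real)" unfolding kk_def by simp
    have r5: "pochhammer (g+1) (Suc k) = pochhammer (g+1) k * gq" unfolding gq_def by (rule pochhammer_Suc)
    have r3': "pochhammer (a + 1) (Suc k) = pochhammer (a + 1) k * (a + 1 + real k)" by (rule pochhammer_Suc)
    have "g \<noteq> 0" "pochhammer (g+1) k \<noteq> 0" "fact k \<noteq> (0::real)" using G g by auto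
    then show ?thesis
      unfolding \<open>i = Suc k\<close> coeff_diff coeff_smult coeff_hpoly
      unfolding hcoef_def r1 r2 r3' r4 r5
      using kk by (simp add: field_simps) (simp add: kk_def gq_def algebra_simps)
  qed
qed



lemma powr_shift_nat:
  fixes z g :: real
  assumes "z \<ge> 0" "g > 0"
  shows "z ^ i * z powr (g - 1) = z powr (g + real i - 1)"
proof (cases "z = 0")
  case True then show ?thesis by (cases i) auto
next
  case False
  then have "z > 0" using assms by simp
  then show ?thesis by (simp add: powr_add[symmetric] powr_realpow[symmetric] algebra_simps)
qed

lemma Lf_has_integral:
  fixes g s :: real
  assumes g: "g > 0" and s: "s > 0"
  shows "((\<lambda>z. poly p z * (z powr (g - 1) * (1 - z) powr (s - 1))) has_integral Lf g s p) {0..1}"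
    and "(\<lambda>z. poly p z * (z powr (g - 1) * (1 - z) powr (s - 1))) absolutely_integrable_on {0..1}"
proof -
  define F where "F i z = coeff p i * (z powr (g + real i - 1) * (1 - z) powr (s - 1))" for i z
  have eq: "poly p z * (z powr (g - 1) * (1 - z) powr (s - 1)) = (\<Sum>i\<le>degree p. F i z)"
    if "z \<in> {0..1}" for z
  proof -
    have "poly p z * (z powr (g - 1) * (1 - z) powr (s - 1)) =
        (\<Sum>i\<le>degree p. coeff p i * (z ^ i * z powr (g - 1)) * (1 - z) powr (s - 1))"
      unfolding poly_altdef sum_distrib_right by (simp add: mult_ac)
    also have "\<dots> = (\<Sum>i\<le>degree p. F i z)"
      using that g by (intro sum.cong refl) (simp add: F_def powr_shift_nat)
    finally show ?thesis .
  qed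
  have gi: "g + real i > 0" for i using g by simp
  have hi: "(F i has_integral coeff p i * Beta (g + real i) s) {0..1}" for i
    unfolding F_def by (intro has_integral_mult_right has_integral_Beta_real gi s)
  have "((\<lambda>z. \<Sum>i\<le>degree p. F i z) has_integral Lf g s p) {0..1}"
    unfolding Lf_def by (rule has_integral_sum) (auto intro: hi)
  then show "((\<lambda>z. poly p z * (z powr (g - 1) * (1 - z) powr (s - 1))) has_integral Lf g s p) {0..1}"
    by (rule has_integral_eq[rotated]) (simp add: eq)
  have ai: "F i absolutely_integrable_on {0..1}" for i
  proof -
    have "(\<lambda>z. z powr (g + real i - 1) * (1 - z) powr (s - 1)) absolutely_integrable_on {0..1}"
      by (rule nonnegative_absolutely_integrable_1)
         (auto intro: integrable_Beta'[of "g + real i" s, simplified] gi s)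
    then show ?thesis unfolding F_def
      using absolutely_integrable_scaleR_left[where c = "coeff p i"] by simp
  qed
  have "(\<lambda>z. \<Sum>i\<le>degree p. F i z) absolutely_integrable_on {0..1}"
    by (rule absolutely_integrable_sum) (auto intro: ai)
  then show "(\<lambda>z. poly p z * (z powr (g - 1) * (1 - z) powr (s - 1))) absolutely_integrable_on {0..1}"
    by (rule absolutely_integrable_spike[of _ _ "{}"]) (auto simp: eq)
qed



lemma subst_integrand_eq:
  fixes c g s x P :: real
  assumes c: "c^2 > 1" and x: "x \<in> {1..\<bar>c\<bar>}"
  shows "\<bar>2 * x / (c^2 - 1)\<bar> * ((c^2 - 1) powr (g + s - 1) / 2 *
          (P * (((x^2 - 1) / (c^2 - 1)) powr (g - 1) * (1 - (x^2 - 1) / (c^2 - 1)) powr (s - 1))))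
       = x * P * ((x^2 - 1) powr (g - 1) * (c^2 - x^2) powr (s - 1))"
proof -
  have c1: "c^2 - 1 > 0" using c by simp
  have x1: "x \<ge> 1" using x by simp
  have e1: "1 - (x^2 - 1) / (c^2 - 1) = (c^2 - x^2) / (c^2 - 1)" using c1 by (simp add: field_simps)
  have e2: "(c^2 - 1) powr (g + s - 1) = (c^2 - 1) * ((c^2 - 1) powr (g - 1) * (c^2 - 1) powr (s - 1))"
  proof -
    have "(c^2 - 1) powr (g + s - 1) = (c^2 - 1) powr (1 + ((g - 1) + (s - 1)))" by (simp add: algebra_simps)
    also have "\<dots> = (c^2 - 1) powr 1 * ((c^2 - 1) powr (g - 1) * (c^2 - 1) powr (s - 1))"
      by (simp only: powr_add)
    finally show ?thesis using abs_of_pos[OF c1] by simp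
  qed
  have pos: "(c^2 - 1) powr (g - 1) > 0" "(c^2 - 1) powr (s - 1) > 0" using c1 by auto
  have ax: "\<bar>2 * x / (c^2 - 1)\<bar> = 2 * x / (c^2 - 1)" using c1 x1 by simp
  show ?thesis unfolding e1 e2 ax powr_divide using c1 pos x1
    by (simp add: field_simps)
qed

lemma image_zc:
  fixes c :: real
  assumes c: "c^2 > 1"
  shows "(\<lambda>x. (x^2 - 1) / (c^2 - 1)) ` {1..\<bar>c\<bar>} = {0..1}"
proof -
  have c1: "c^2 - 1 > 0" using c by simp
  show ?thesis
  proof (intro equalityI subsetI)
    fix z assume "z \<in> (\<lambda>x. (x^2 - 1) / (c^2 - 1)) ` {1..\<bar>c\<bar>}"
    then obtain x where x: "x \<in> {1..\<bar>c\<bar>}" and z: "z = (x^2 - 1) / (c^2 - 1)" by auto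
    have "x^2 \<ge> 1" using x by simp
    moreover have "x^2 \<le> \<bar>c\<bar>^2" using x by (intro power_mono) auto
    ultimately show "z \<in> {0..1}" unfolding z using c1 by (simp add: field_simps)
  next
    fix z :: real assume z: "z \<in> {0..1}"
    define x where "x = sqrt (1 + (c^2 - 1) * z)"
    have q: "1 + (c^2 - 1) * z \<ge> 1" using z c1 by simp
    have q2: "1 + (c^2 - 1) * z \<le> c^2"
    proof -
      have "(c^2 - 1) * z \<le> (c^2 - 1) * 1" using z c1 by (intro mult_left_mono) auto
      then show ?thesis by simp
    qed
    have "x \<ge> 1" unfolding x_def using q by simp
    moreover have "x \<le> \<bar>c\<bar>" unfolding x_def using q2 real_sqrt_le_mono[OF q2] by simp
    moreover have "x^2 = 1 + (c^2 - 1) * z" unfolding x_def using q by simp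
    ultimately show "z \<in> (\<lambda>x. (x^2 - 1) / (c^2 - 1)) ` {1..\<bar>c\<bar>}"
      using c1 by (intro image_eqI[of _ _ x]) auto
  qed
qed

lemma subst_x:
  fixes c g s :: real
  assumes g: "g > 0" and s: "s > 0" and c: "c^2 > 1"
  shows "(\<lambda>x. x * poly W ((x^2 - 1) / (c^2 - 1)) * ((x^2 - 1) powr (g - 1) * (c^2 - x^2) powr (s - 1)))
           absolutely_integrable_on {1..\<bar>c\<bar>}"
    and "((\<lambda>x. x * poly W ((x^2 - 1) / (c^2 - 1)) * ((x^2 - 1) powr (g - 1) * (c^2 - x^2) powr (s - 1)))
           has_integral ((c^2 - 1) powr (g + s - 1) / 2 * Lf g s W)) {1..\<bar>c\<bar>}"
proof -
  have c1: "c^2 - 1 > 0" using c by simp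
  define K where "K = (c^2 - 1) powr (g + s - 1) / 2"
  define f where "f z = K * (poly W z * (z powr (g - 1) * (1 - z) powr (s - 1)))" for z
  define g0 where "g0 x = (x^2 - 1) / (c^2 - 1)" for x :: real
  have fai: "f absolutely_integrable_on {0..1}"
    unfolding f_def using absolutely_integrable_scaleR_left[OF Lf_has_integral(2)[OF g s, of W], where c = K]
    by simp
  have fint: "integral {0..1} f = K * Lf g s W"
    unfolding f_def using Lf_has_integral(1)[OF g s, of W]
    by (intro integral_unique has_integral_mult_right)
  have img: "g0 ` {1..\<bar>c\<bar>} = {0..1}" unfolding g0_def by (rule image_zc[OF c])
  have der: "(g0 has_field_derivative (2 * x / (c^2 - 1))) (at x within {1..\<bar>c\<bar>})" for x
  proof -
    have "((\<lambda>x. x^2 - 1) has_field_derivative (2 * x)) (at x within {1..\<bar>c\<bar>})"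
      by (auto intro!: derivative_eq_intros)
    from DERIV_cdivide[OF this, of "c^2 - 1"] show ?thesis unfolding g0_def by simp
  qed
  have inj: "inj_on g0 {1..\<bar>c\<bar>}"
  proof (rule inj_onI)
    fix x y assume x: "x \<in> {1..\<bar>c\<bar>}" and y: "y \<in> {1..\<bar>c\<bar>}" and e: "g0 x = g0 y"
    then have "x^2 = y^2" unfolding g0_def using c1 by (simp add: field_simps)
    then show "x = y" using x y by (simp add: power2_eq_iff_nonneg)
  qed
  have main: "(\<lambda>x. \<bar>2 * x / (c^2 - 1)\<bar> * f (g0 x)) absolutely_integrable_on {1..\<bar>c\<bar>} \<and>
     integral {1..\<bar>c\<bar>} (\<lambda>x. \<bar>2 * x / (c^2 - 1)\<bar> * f (g0 x)) = K * Lf g s W"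
  proof -
    have "(\<lambda>x. \<bar>2 * x / (c^2 - 1)\<bar> * f (g0 x)) absolutely_integrable_on {1..\<bar>c\<bar>} \<and>
     integral {1..\<bar>c\<bar>} (\<lambda>x. \<bar>2 * x / (c^2 - 1)\<bar> * f (g0 x)) = K * Lf g s W
      \<longleftrightarrow> f absolutely_integrable_on (g0 ` {1..\<bar>c\<bar>}) \<and> integral (g0 ` {1..\<bar>c\<bar>}) f = K * Lf g s W"
      by (rule has_absolute_integral_change_of_variables_1') (simp_all add: der inj)
    then show ?thesis unfolding img using fai fint by blast
  qed
  have eqf: "\<bar>2 * x / (c^2 - 1)\<bar> * f (g0 x) =
      x * poly W ((x^2 - 1) / (c^2 - 1)) * ((x^2 - 1) powr (g - 1) * (c^2 - x^2) powr (s - 1))"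
    if "x \<in> {1..\<bar>c\<bar>}" for x
    unfolding f_def g0_def K_def using subst_integrand_eq[OF c that] by simp
  show ai: "(\<lambda>x. x * poly W ((x^2 - 1) / (c^2 - 1)) * ((x^2 - 1) powr (g - 1) * (c^2 - x^2) powr (s - 1)))
           absolutely_integrable_on {1..\<bar>c\<bar>}"
    by (rule absolutely_integrable_spike[OF conjunct1[OF main] negligible_empty]) (metis Diff_empty eqf)
  have "integral {1..\<bar>c\<bar>} (\<lambda>x. x * poly W ((x^2 - 1) / (c^2 - 1)) * ((x^2 - 1) powr (g - 1) * (c^2 - x^2) powr (s - 1)))
      = integral {1..\<bar>c\<bar>} (\<lambda>x. \<bar>2 * x / (c^2 - 1)\<bar> * f (g0 x))"
    by (rule integral_cong) (rule eqf[symmetric])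
  also have "\<dots> = K * Lf g s W" using main by blast
  finally have iv: "integral {1..\<bar>c\<bar>} (\<lambda>x. x * poly W ((x^2 - 1) / (c^2 - 1)) * ((x^2 - 1) powr (g - 1) * (c^2 - x^2) powr (s - 1)))
      = K * Lf g s W" .
  have "(\<lambda>x. x * poly W ((x^2 - 1) / (c^2 - 1)) * ((x^2 - 1) powr (g - 1) * (c^2 - x^2) powr (s - 1))) integrable_on {1..\<bar>c\<bar>}"
    using ai by (rule absolutely_integrable_on_def[THEN iffD1, THEN conjunct1])
  with iv show "((\<lambda>x. x * poly W ((x^2 - 1) / (c^2 - 1)) * ((x^2 - 1) powr (g - 1) * (c^2 - x^2) powr (s - 1)))
           has_integral ((c^2 - 1) powr (g + s - 1) / 2 * Lf g s W)) {1..\<bar>c\<bar>}"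
    unfolding K_def using has_integral_integrable_integral by blast
qed



lemma cont_times_absint:
  fixes B m :: "real \<Rightarrow> real"
  assumes "continuous_on {l..u} B" "m absolutely_integrable_on {l..u}"
  shows "(\<lambda>x. B x * m x) absolutely_integrable_on {l..u}"
proof (rule absolutely_integrable_bounded_measurable_product_real)
  show "B \<in> borel_measurable (lebesgue_on {l..u})"
    using assms(1) by (rule continuous_imp_measurable_on_sets_lebesgue) simp
  show "bounded (B ` {l..u})"
    using assms(1) by (intro compact_imp_bounded compact_continuous_image) auto
qed (use assms in auto)

definition wtU :: "real \<Rightarrow> real \<Rightarrow> real \<Rightarrow> real \<Rightarrow> real" where
  "wtU a b c x = sgn (c * x) * (1 + x) * (c - x) * ((x^2 - 1) powr ((a - 1) / 2) * (c^2 - x^2) powr ((b - 1) / 2))"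

definition DomU :: "real \<Rightarrow> real set" where
  "DomU c = {- \<bar>c\<bar> .. -1} \<union> {1 .. \<bar>c\<bar>}"

lemma ana:
  fixes a b c :: real and U V :: "real poly"
  assumes a: "a > -1" and b: "b > -1" and c: "c^2 > 1"
  defines "H \<equiv> \<lambda>x. wtU a b c x * (poly U ((x^2 - 1) / (c^2 - 1)) + x * poly V ((x^2 - 1) / (c^2 - 1)))"
  shows "H absolutely_integrable_on DomU c"
    and "(H has_integral (sgn c * (c^2 - 1) powr ((a + b) / 2) * (c - 1)
            * Lf ((a + 1) / 2) ((b + 1) / 2) (U + [:1, -(c + 1):] * V))) (DomU c)"
proof -
  define g where "g = (a + 1) / 2"
  define s where "s = (b + 1) / 2"
  have g: "g > 0" and s: "s > 0" using a b unfolding g_def s_def by auto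
  have c1: "c^2 - 1 > 0" using c by simp
  define C where "C = \<bar>c\<bar>"
  have C1: "C > 1" unfolding C_def using c by (metis abs_le_square_iff abs_one not_le one_power2 order.strict_iff_not) 
  define z where "z x = (x^2 - 1) / (c^2 - 1)" for x :: real
  define Pw where "Pw x = (x^2 - 1) powr (g - 1) * (c^2 - x^2) powr (s - 1)" for x :: real
  define m where "m x = x * Pw x" for x
  have ea: "(a - 1) / 2 = g - 1" and eb: "(b - 1) / 2 = s - 1" unfolding g_def s_def by (simp_all add: field_simps)
  have Hx: "H x = wtU a b c x * (poly U (z x) + x * poly V (z x))" for x unfolding H_def z_def by simp
  have wt: "wtU a b c x = sgn (c * x) * (1 + x) * (c - x) * Pw x" for x
    unfolding wtU_def Pw_def ea eb by simp
  have m1: "(\<lambda>x. x * poly 1 (z x) * Pw x) absolutely_integrable_on {1..C}"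
    unfolding C_def z_def Pw_def by (rule subst_x(1)[OF g s c])
  then have mai: "m absolutely_integrable_on {1..C}" unfolding m_def by simp
  have zneg: "z (-x) = z x" for x unfolding z_def by simp
  have Pneg: "Pw (-x) = Pw x" for x unfolding Pw_def by simp
  define B1 where "B1 x = sgn c * (1 + x) * (c - x) * (poly U (z x) + x * poly V (z x)) / x" for x
  define B2 where "B2 x = - sgn c * (1 - x) * (c + x) * (poly U (z x) - x * poly V (z x)) / x" for x
  have cB1: "continuous_on {1..C} B1" unfolding B1_def z_def
    using c1 by (intro continuous_intros) auto
  have cB2: "continuous_on {1..C} B2" unfolding B2_def z_def
    using c1 by (intro continuous_intros) auto
  have H1: "H x = B1 x * m x" if "x \<in> {1..C}" for x
  proof -
    have "x > 0" using that C1 by simp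
    then show ?thesis unfolding Hx wt B1_def m_def by (simp add: sgn_mult)
  qed
  have H2: "H (-x) = B2 x * m x" if "x \<in> {1..C}" for x
  proof -
    have "x > 0" using that C1 by simp
    then show ?thesis unfolding Hx wt B2_def m_def zneg Pneg by (simp add: sgn_mult)
  qed
  have ai1: "H absolutely_integrable_on {1..C}"
    using cont_times_absint[OF cB1 mai] by (rule absolutely_integrable_spike[OF _ negligible_empty]) (simp add: H1)
  have ai2': "(\<lambda>x. H (-x)) absolutely_integrable_on {1..C}"
    using cont_times_absint[OF cB2 mai] by (rule absolutely_integrable_spike[OF _ negligible_empty]) (simp add: H2)
  have ai2: "H absolutely_integrable_on {-C..-1}"
    using ai2' absolutely_integrable_reflect_real[where f="\<lambda>x. H (-x)" and a=1 and b=C] by simp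
  have dom: "DomU c = {-C..-1} \<union> {1..C}" unfolding DomU_def C_def by simp
  show "H absolutely_integrable_on DomU c" unfolding dom
    by (rule absolutely_integrable_Un[OF ai2 ai1])
  define I1 where "I1 = integral {1..C} H"
  define I2 where "I2 = integral {1..C} (\<lambda>x. H (-x))"
  have hi1: "(H has_integral I1) {1..C}" unfolding I1_def
    using ai1 absolutely_integrable_on_def by blast
  have hi2': "((\<lambda>x. H (-x)) has_integral I2) {1..C}" unfolding I2_def
    using ai2' absolutely_integrable_on_def by blast
  have hi2: "(H has_integral I2) {-C..-1}"
    using hi2' has_integral_reflect_real[where f="\<lambda>x. H (-x)" and i=I2 and a=1 and b=C] by simp
  define W where "W = U + [:1, -(c + 1):] * V"
  define T where "T = sgn c * (c^2 - 1) powr ((a + b) / 2) * (c - 1) * Lf g s W"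
  have sumeq: "H x + H (-x) = (2 * sgn c * (c - 1)) * (x * poly W (z x) * Pw x)" if "x \<in> {1..C}" for x
  proof -
    have x0: "x > 0" using that C1 by simp
    have zz: "(c - 1) * (1 - (c + 1) * z x) = c - x^2"
      unfolding z_def using c1 by (simp add: field_simps power2_eq_square)
    have "H x + H (-x) = sgn c * Pw x * ((1 + x) * (c - x) * (poly U (z x) + x * poly V (z x))
                         - (1 - x) * (c + x) * (poly U (z x) - x * poly V (z x)))"
      unfolding Hx wt zneg Pneg using x0 by (simp add: sgn_mult algebra_simps)
    also have "\<dots> = sgn c * Pw x * (2 * x * ((c - 1) * poly U (z x) + (c - x^2) * poly V (z x)))"
      by (simp add: algebra_simps power2_eq_square)
    also have "\<dots> = sgn c * Pw x * (2 * x * ((c - 1) * (poly U (z x) + (1 - (c + 1) * z x) * poly V (z x))))"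
      unfolding zz[symmetric] by (simp add: algebra_simps)
    also have "\<dots> = (2 * sgn c * (c - 1)) * (x * poly W (z x) * Pw x)"
      unfolding W_def by (simp add: algebra_simps)
    finally show ?thesis .
  qed
  have hW: "((\<lambda>x. x * poly W (z x) * Pw x) has_integral ((c^2 - 1) powr (g + s - 1) / 2 * Lf g s W)) {1..C}"
    unfolding C_def z_def Pw_def by (rule subst_x(2)[OF g s c])
  have gs: "g + s - 1 = (a + b) / 2" unfolding g_def s_def by (simp add: field_simps)
  have val: "(2 * sgn c * (c - 1)) * ((c^2 - 1) powr (g + s - 1) / 2 * Lf g s W) = T"
    unfolding T_def gs by simp
  have hT: "((\<lambda>x. (2 * sgn c * (c - 1)) * (x * poly W (z x) * Pw x)) has_integral T) {1..C}"
    using has_integral_mult_right[OF hW, of "2 * sgn c * (c - 1)"] unfolding val .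
  have "((\<lambda>x. H x + H (-x)) has_integral (I1 + I2)) {1..C}"
    by (rule has_integral_add[OF hi1 hi2'])
  then have "((\<lambda>x. (2 * sgn c * (c - 1)) * (x * poly W (z x) * Pw x)) has_integral (I1 + I2)) {1..C}"
    by (rule has_integral_eq[rotated]) (simp add: sumeq)
  then have IT: "I1 + I2 = T" using hT by (rule has_integral_unique)
  have "(H has_integral (I2 + I1)) ({-C..-1} \<union> {1..C})"
    by (rule has_integral_Un[OF hi2 hi1]) (use C1 in auto)
  then show "(H has_integral (sgn c * (c^2 - 1) powr ((a + b) / 2) * (c - 1)
            * Lf ((a + 1) / 2) ((b + 1) / 2) (U + [:1, -(c + 1):] * V))) (DomU c)"
    using IT unfolding dom T_def W_def g_def s_def by (simp add: add.commute)
qed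



lemma hyp2F1_hpoly:
  "hyp2F1 (- real N) A B z = poly (hpoly N A B) z"
proof -
  have "hyp2F1 (- real N) A B z = (\<Sum>j\<le>N. pochhammer (- real N) j * pochhammer A j / (pochhammer B j * fact j) * z ^ j)"
    unfolding hyp2F1_def
    by (rule suminf_finite) (auto simp: pochhammer_of_nat_eq_0_lemma)
  also have "\<dots> = poly (hpoly N A B) z"
    unfolding hpoly_def hcoef_def by (simp add: poly_sum poly_monom)
  finally show ?thesis .
qed

lemma hpoly_0 [simp]: "hpoly 0 A B = 1"
  by (simp add: hpoly_def hcoef_def)

definition zz :: "real \<Rightarrow> real \<Rightarrow> real" where "zz c x = (x^2 - 1) / (c^2 - 1)"

definition Ap :: "nat \<Rightarrow> real \<Rightarrow> real \<Rightarrow> real" where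
  "Ap n a b = real (n div 2) + (a + 1) / 2 + (b + 1) / 2"

definition Pp :: "nat \<Rightarrow> real \<Rightarrow> real \<Rightarrow> real poly" where
  "Pp n a b = hpoly (n div 2) (Ap n a b) ((a + 1) / 2)"

definition Qp :: "nat \<Rightarrow> real \<Rightarrow> real \<Rightarrow> real \<Rightarrow> real poly" where
  "Qp n a b c = (if even n then smult (real (n div 2) / ((a + 1) / 2 * (1 + c))) (hpoly (n div 2 - 1) (Ap n a b) ((a + 1) / 2 + 1))
                 else smult (- Ap n a b / ((a + 1) / 2 * (1 + c))) (hpoly (n div 2) (Ap n a b + 1) ((a + 1) / 2 + 1)))"

lemma aux_div: "(D::real) \<noteq> 0 \<Longrightarrow> r * (1 - x) / D = - ((1 - x) * (- (r / 2) / (D / 2)))"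
  by (simp add: field_simps)

lemma bigJ_rep:
  assumes a: "a > -1" and c: "c \<noteq> -1"
  shows "bigJ n x a b c = poly (Pp n a b) (zz c x) + (1 - x) * poly (Qp n a b c) (zz c x)"
proof -
  define N where "N = n div 2"
  have zeq: "(1 - x^2) / (1 - c^2) = zz c x" unfolding zz_def
    by (metis minus_diff_eq minus_divide_divide)
  have a1: "a + 1 \<noteq> 0" using a by simp
  have c1: "1 + c \<noteq> 0" using c by (metis add.commute add_eq_0_iff)
  show ?thesis
  proof (cases "even n")
    case True
    then have n: "n = 2 * N" unfolding N_def by simp
    have e1: "- real n / 2 = - real N" unfolding n by simp
    have e2: "(real n + a + b + 2) / 2 = Ap n a b" unfolding Ap_def N_def[symmetric] n by (simp add: field_simps)
    have e3: "(a + 3) / 2 = (a + 1) / 2 + 1" by simp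
    have e4: "real n * (1 - x) / ((1 + c) * (a + 1)) = (1 - x) * (real N / ((a + 1) / 2 * (1 + c)))"
      unfolding n using a1 c1 by (simp add: field_simps)
    show ?thesis
    proof (cases "N = 0")
      case True
      then have "n = 0" using n by simp
      then show ?thesis unfolding bigJ_def Let_def zeq Pp_def Qp_def N_def[symmetric]
        using True by (simp add: hyp2F1_hpoly[of 0, simplified])
    next
      case False
      have e5: "1 - real n / 2 = - real (N - 1)" unfolding n using False by simp
      show ?thesis unfolding bigJ_def Let_def zeq Pp_def Qp_def N_def[symmetric]
        using True unfolding e1 e2 e3 e5 e4 by (simp add: hyp2F1_hpoly N_def)
    qed
  next
    case False
    then have n: "n = 2 * N + 1" unfolding N_def by presburger
    have e1: "- (real n - 1) / 2 = - real N" unfolding n by simp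
    have e2: "(real n + a + b + 1) / 2 = Ap n a b" unfolding Ap_def N_def[symmetric] n by (simp add: field_simps)
    have e2': "(real n + a + b + 3) / 2 = Ap n a b + 1" unfolding Ap_def N_def[symmetric] n by (simp add: field_simps)
    have e3: "(a + 3) / 2 = (a + 1) / 2 + 1" by simp
    have e4: "(real n + a + b + 1) * (1 - x) / ((1 + c) * (a + 1)) = - ((1 - x) * (- Ap n a b / ((a + 1) / 2 * (1 + c))))"
    proof -
      have "(a + 1) / 2 * (1 + c) = ((1 + c) * (a + 1)) / 2" by simp
      moreover have "(1 + c) * (a + 1) \<noteq> 0" using a1 c1 by simp
      ultimately show ?thesis unfolding e2[symmetric]
        using aux_div[of "(1 + c) * (a + 1)" "real n + a + b + 1" x] by simp
    qed
    show ?thesis unfolding bigJ_def Let_def zeq Pp_def Qp_def N_def[symmetric]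
      using False unfolding e1 e2 e2' e3 e4 by (simp add: hyp2F1_hpoly N_def)
  qed
qed



lemma OG:
  assumes g: "g > 0" and s: "s > 0" and p: "degree p < N \<or> p = 0"
  shows "Lf g s (p * hpoly N (real N + g + s - 1) g) = 0"
proof (cases "p = 0")
  case True then show ?thesis by simp
next
  case False
  with p have dp: "degree p < N" by simp
  have "p * hpoly N (real N + g + s - 1) g = (\<Sum>j\<le>degree p. smult (coeff p j) (monom 1 j * hpoly N (real N + g + s - 1) g))"
    by (subst (1) poly_as_sum_of_monoms[symmetric]) (simp add: sum_distrib_right smult_monom_mult)
  then show ?thesis
    using dp by (simp add: Lf_sum Lf_smult orth_sum[OF g s])
qed

definition nv :: "real \<Rightarrow> real \<Rightarrow> nat \<Rightarrow> real" where
  "nv g s N = Beta (g + real N) s * (-1)^N * pochhammer s N * fact N / (pochhammer g N * pochhammer (real N + g + s) N)"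

lemma NG:
  assumes g: "g > 0" and s: "s > 0" and p: "degree p \<le> N"
  shows "Lf g s (p * hpoly N (real N + g + s - 1) g) = coeff p N * nv g s N"
proof -
  define q where "q = p - monom (coeff p N) N"
  have cq: "coeff q N = 0" unfolding q_def by simp
  have dq: "degree q \<le> N" unfolding q_def using p by (intro degree_diff_le) (auto simp: degree_monom_le)
  have q0: "degree q < N \<or> q = 0"
  proof (rule ccontr)
    assume "\<not> ?thesis"
    then have "degree q = N" "q \<noteq> 0" using dq by auto
    then show False using cq by (metis leading_coeff_0_iff)
  qed
  have "p = monom (coeff p N) N + q" unfolding q_def by simp
  then have "Lf g s (p * hpoly N (real N + g + s - 1) g)
      = Lf g s (smult (coeff p N) (monom 1 N * hpoly N (real N + g + s - 1) g)) + Lf g s (q * hpoly N (real N + g + s - 1) g)"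
    by (metis Lf_add distrib_right smult_monom_mult mult.right_neutral)
  also have "\<dots> = coeff p N * nv g s N"
    using OG[OF g s q0] norm_sum[OF g s] by (simp add: Lf_smult nv_def)
  finally show ?thesis .
qed

definition En :: "nat \<Rightarrow> real \<Rightarrow> real \<Rightarrow> real \<Rightarrow> real poly" where
  "En n a b c = Pp n a b + Qp n a b c"

definition On :: "nat \<Rightarrow> real \<Rightarrow> real \<Rightarrow> real \<Rightarrow> real poly" where
  "On n a b c = - Qp n a b c"

lemma degree_Pp: "degree (Pp n a b) \<le> n div 2"
  unfolding Pp_def by (rule degree_hpoly)

lemma Qp_0: "Qp 0 a b c = 0"
  by (simp add: Qp_def)

lemma degree_Qp: "degree (Qp n a b c) \<le> (n - 1) div 2"
proof (cases "even n")
  case True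
  then obtain N where n: "n = 2 * N" by blast
  have "degree (hpoly (N - 1) (Ap n a b) ((a + 1) / 2 + 1)) \<le> N - 1" by (rule degree_hpoly)
  moreover have "(n - 1) div 2 = N - 1" unfolding n by (cases N) auto
  ultimately show ?thesis using True unfolding Qp_def n by (auto intro: order.trans[OF degree_smult_le])
next
  case False
  then obtain N where n: "n = 2 * N + 1" by (metis oddE)
  have "degree (hpoly N (Ap n a b + 1) ((a + 1) / 2 + 1)) \<le> N" by (rule degree_hpoly)
  moreover have "(n - 1) div 2 = N" "n div 2 = N" unfolding n by auto
  ultimately show ?thesis using False unfolding Qp_def n by (auto intro: order.trans[OF degree_smult_le])
qed

lemma degree_En: "degree (En n a b c) \<le> n div 2"
  unfolding En_def using degree_Pp[of n a b] degree_Qp[of n a b c]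
  by (intro degree_add_le) (auto intro: order.trans[OF _ div_le_mono])

lemma degree_On: "degree (On n a b c) \<le> (n - 1) div 2"
  unfolding On_def using degree_Qp[of n a b c] by simp

lemma On_0: "On 0 a b c = 0"
  by (simp add: On_def Qp_0)



definition kap :: "nat \<Rightarrow> real \<Rightarrow> real \<Rightarrow> real" where
  "kap n a b = (if even n then ((a + 1) / 2 + real (n div 2)) / ((a + 1) / 2) else ((a + 1) / 2 - Ap n a b) / ((a + 1) / 2))"

lemma cancel_aux: "(x::real) \<noteq> 0 \<Longrightarrow> x * (r / (g * x)) = r / g"
  by (cases "g = 0") auto

lemma R1_id:
  assumes a: "a > -1" and c: "c \<noteq> -1"
  shows "Pp n a b + [:0, 1 + c:] * Qp n a b c
       = hpoly ((n + 1) div 2) (real ((n + 1) div 2) + (a + 1) / 2 + (b + 1) / 2 - 1) ((a + 1) / 2)"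
proof -
  define g where "g = (a + 1) / 2"
  have g: "g > 0" unfolding g_def using a by simp
  have c1: "1 + c \<noteq> 0" using c by (metis add.commute add_eq_0_iff)
  show ?thesis
  proof (cases "even n")
    case True
    then obtain N where n: "n = 2 * N" by blast
    have d: "(n + 1) div 2 = N" "n div 2 = N" unfolding n by auto
    have e: "[:0, 1 + c:] * smult (real N / (g * (1 + c))) p = smult (real N / g) (pCons 0 p)" for p
      using cancel_aux[OF c1, of "real N" g] by simp
    have "Ap n a b - 1 = real N + g + (b + 1) / 2 - 1" unfolding Ap_def d g_def by simp
    then show ?thesis using True contig_E1[OF g, of N "Ap n a b"] c1
      unfolding Pp_def Qp_def d g_def[symmetric] e by (simp add: add.assoc)
  next
    case False
    then obtain N where n: "n = 2 * N + 1" by (metis oddE)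
    have d: "(n + 1) div 2 = Suc N" "n div 2 = N" unfolding n by auto
    have e: "[:0, 1 + c:] * smult (- Ap n a b / (g * (1 + c))) p = - smult (Ap n a b / g) (pCons 0 p)" for p
      using cancel_aux[OF c1, of "- Ap n a b" g] by simp
    have A: "Ap n a b = real (Suc N) + g + (b + 1) / 2 - 1" unfolding Ap_def d g_def by simp
    have "Pp n a b + [:0, 1 + c:] * Qp n a b c
        = hpoly N (Ap n a b) g + [:0, 1 + c:] * smult (- Ap n a b / (g * (1 + c))) (hpoly N (Ap n a b + 1) (g + 1))"
      unfolding Pp_def Qp_def d g_def[symmetric] using False by simp
    also have "\<dots> = hpoly N (Ap n a b) g - smult (Ap n a b / g) (pCons 0 (hpoly N (Ap n a b + 1) (g + 1)))"
      unfolding e add_uminus_conv_diff by (rule refl)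
    also have "\<dots> = hpoly (Suc N) (Ap n a b) g" by (rule contig_O1[OF g])
    finally show ?thesis unfolding A d g_def by simp
  qed
qed

lemma R2_id:
  assumes a: "a > -1" and c: "c \<noteq> -1"
  shows "Pp n a b + smult (1 + c) (Qp n a b c)
       = smult (kap n a b) (hpoly (n div 2) (real (n div 2) + ((a + 1) / 2 + 1) + (b + 1) / 2 - 1) ((a + 1) / 2 + 1))"
proof -
  define g where "g = (a + 1) / 2"
  have g: "g > 0" unfolding g_def using a by simp
  have c1: "1 + c \<noteq> 0" using c by (metis add.commute add_eq_0_iff)
  have A: "Ap n a b = real (n div 2) + (g + 1) + (b + 1) / 2 - 1" unfolding Ap_def g_def by simp
  show ?thesis
  proof (cases "even n")
    case True
    then obtain N where n: "n = 2 * N" by blast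
    have d: "n div 2 = N" unfolding n by auto
    have e: "smult (1 + c) (smult (real N / (g * (1 + c))) p) = smult (real N / g) p" for p
      using cancel_aux[OF c1, of "real N" g] by simp
    show ?thesis using True contig_E2[OF g, of N "Ap n a b"] A c1
      unfolding Pp_def Qp_def kap_def d g_def[symmetric] e by (simp add: add.commute)
  next
    case False
    then obtain N where n: "n = 2 * N + 1" by (metis oddE)
    have d: "n div 2 = N" unfolding n by auto
    have e: "smult (1 + c) (smult (- Ap n a b / (g * (1 + c))) p) = - smult (Ap n a b / g) p" for p
      using cancel_aux[OF c1, of "- Ap n a b" g] by simp
    have "Pp n a b + smult (1 + c) (Qp n a b c)
        = hpoly N (Ap n a b) g + smult (1 + c) (smult (- Ap n a b / (g * (1 + c))) (hpoly N (Ap n a b + 1) (g + 1)))"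
      unfolding Pp_def Qp_def d g_def[symmetric] using False by simp
    also have "\<dots> = hpoly N (Ap n a b) g - smult (Ap n a b / g) (hpoly N (Ap n a b + 1) (g + 1))"
      unfolding e add_uminus_conv_diff by (rule refl)
    also have "\<dots> = smult ((g - Ap n a b) / g) (hpoly N (Ap n a b) (g + 1))" by (rule contig_O2[OF g])
    finally show ?thesis using False unfolding A kap_def d g_def by simp
  qed
qed



definition Uq :: "nat \<Rightarrow> nat \<Rightarrow> real \<Rightarrow> real \<Rightarrow> real \<Rightarrow> real poly" where
  "Uq n m a b c = En n a b c * En m a b c + [:1, c^2 - 1:] * On n a b c * On m a b c"

definition Vq :: "nat \<Rightarrow> nat \<Rightarrow> real \<Rightarrow> real \<Rightarrow> real \<Rightarrow> real poly" where
  "Vq n m a b c = En n a b c * On m a b c + On n a b c * En m a b c"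

lemma bigJ_EO:
  assumes a: "a > -1" and c: "c \<noteq> -1"
  shows "bigJ n x a b c = poly (En n a b c) (zz c x) + x * poly (On n a b c) (zz c x)"
  unfolding bigJ_rep[OF a c] En_def On_def by (simp add: algebra_simps)

lemma bigJ_prod:
  assumes a: "a > -1" and c: "c^2 > 1"
  shows "bigJ n x a b c * bigJ m x a b c = poly (Uq n m a b c) (zz c x) + x * poly (Vq n m a b c) (zz c x)"
proof -
  have c1: "c \<noteq> -1" using c by auto
  have x2: "x^2 = 1 + (c^2 - 1) * zz c x" unfolding zz_def using c by (simp add: field_simps)
  let ?z = "zz c x"
  have "poly (Uq n m a b c) ?z + x * poly (Vq n m a b c) ?z
      = poly (En n a b c) ?z * poly (En m a b c) ?z + (1 + (c^2 - 1) * ?z) * poly (On n a b c) ?z * poly (On m a b c) ?z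
        + x * (poly (En n a b c) ?z * poly (On m a b c) ?z + poly (On n a b c) ?z * poly (En m a b c) ?z)"
    unfolding Uq_def Vq_def by (simp add: algebra_simps)
  also have "\<dots> = (poly (En n a b c) ?z + x * poly (On n a b c) ?z) * (poly (En m a b c) ?z + x * poly (On m a b c) ?z)"
    unfolding x2[symmetric] by (simp add: algebra_simps power2_eq_square)
  finally show ?thesis unfolding bigJ_EO[OF a c1] by simp
qed

lemma poly_id1:
  fixes P Q :: "real poly"
  shows "[:1, c^2 - 1:] * (- Q) + [:1, -(c + 1):] * (P + Q) = [:1, -1:] * P - smult c ([:0, 1:] * (P + smult (1 + c) Q))"
  by (rule poly_eq_poly_eq_iff[THEN iffD1]) (simp add: fun_eq_iff algebra_simps power2_eq_square)

lemma poly_id2: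
  fixes P Q :: "real poly"
  shows "P + Q + [:1, -(c + 1):] * (- Q) = P + [:0, 1 + c:] * Q"
  by (rule poly_eq_poly_eq_iff[THEN iffD1]) (simp add: fun_eq_iff algebra_simps)

lemma Lf_decomp:
  assumes a: "a > -1" and b: "b > -1" and c: "c^2 > 1"
  defines "g \<equiv> (a + 1) / 2" and "s \<equiv> (b + 1) / 2"
  shows "Lf g s (Uq n m a b c + [:1, -(c + 1):] * Vq n m a b c)
       = Lf g s (En m a b c * hpoly ((n + 1) div 2) (real ((n + 1) div 2) + g + s - 1) g)
         + Lf g (s + 1) (On m a b c * hpoly (n div 2) (real (n div 2) + g + (s + 1) - 1) g)
         - c * kap n a b * Lf (g + 1) s (On m a b c * hpoly (n div 2) (real (n div 2) + (g + 1) + s - 1) (g + 1))"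
proof -
  have gp: "g > 0" and sp: "s > 0" unfolding g_def s_def using a b by auto
  have c1: "c \<noteq> -1" using c by auto
  let ?L1 = "[:1, -(c + 1):] :: real poly"
  let ?X = "[:1, c^2 - 1:] :: real poly"
  have split: "Uq n m a b c + ?L1 * Vq n m a b c
     = En m a b c * (En n a b c + ?L1 * On n a b c) + On m a b c * (?X * On n a b c + ?L1 * En n a b c)"
    unfolding Uq_def Vq_def by (simp add: algebra_simps)
  have r1: "En n a b c + ?L1 * On n a b c = hpoly ((n + 1) div 2) (real ((n + 1) div 2) + g + s - 1) g"
    unfolding En_def On_def poly_id2 R1_id[OF a c1] g_def s_def ..
  have Pp_eq: "Pp n a b = hpoly (n div 2) (real (n div 2) + g + (s + 1) - 1) g"
    unfolding Pp_def Ap_def g_def s_def by (simp add: algebra_simps)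
  have r2: "?X * On n a b c + ?L1 * En n a b c
      = [:1, -1:] * Pp n a b - smult c ([:0, 1:] * smult (kap n a b) (hpoly (n div 2) (real (n div 2) + (g + 1) + s - 1) (g + 1)))"
    unfolding En_def On_def poly_id1 R2_id[OF a c1] g_def s_def ..
  have "Lf g s (Uq n m a b c + ?L1 * Vq n m a b c)
      = Lf g s (En m a b c * hpoly ((n + 1) div 2) (real ((n + 1) div 2) + g + s - 1) g)
        + (Lf g s ([:1, -1:] * (On m a b c * Pp n a b))
           - c * kap n a b * Lf g s ([:0, 1:] * (On m a b c * hpoly (n div 2) (real (n div 2) + (g + 1) + s - 1) (g + 1))))"
    unfolding split r1 r2 by (simp add: Lf_add Lf_diff Lf_smult Lf_pCons0 algebra_simps mult_smult_right)
  also have "\<dots> = Lf g s (En m a b c * hpoly ((n + 1) div 2) (real ((n + 1) div 2) + g + s - 1) g)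
         + Lf g (s + 1) (On m a b c * hpoly (n div 2) (real (n div 2) + g + (s + 1) - 1) g)
         - c * kap n a b * Lf (g + 1) s (On m a b c * hpoly (n div 2) (real (n div 2) + (g + 1) + s - 1) (g + 1))"
    unfolding Lf_1mx[OF gp sp] Lf_x Pp_eq by simp
  finally show ?thesis .
qed

lemma Lf_orth_lt:
  assumes a: "a > -1" and b: "b > -1" and c: "c^2 > 1" and mn: "m < n"
  shows "Lf ((a + 1) / 2) ((b + 1) / 2) (Uq n m a b c + [:1, -(c + 1):] * Vq n m a b c) = 0"
proof -
  define g where "g = (a + 1) / 2"
  define s where "s = (b + 1) / 2"
  have gp: "g > 0" and sp: "s > 0" unfolding g_def s_def using a b by auto
  have t1: "Lf g s (En m a b c * hpoly ((n + 1) div 2) (real ((n + 1) div 2) + g + s - 1) g) = 0"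
  proof (rule OG[OF gp sp])
    have "degree (En m a b c) \<le> m div 2" by (rule degree_En)
    moreover have "m div 2 < (n + 1) div 2" using mn by presburger
    ultimately show "degree (En m a b c) < (n + 1) div 2 \<or> En m a b c = 0" by simp
  qed
  have dO: "degree (On m a b c) < n div 2 \<or> On m a b c = 0"
  proof (cases "m = 0")
    case True then show ?thesis by (simp add: On_0)
  next
    case False
    have "degree (On m a b c) \<le> (m - 1) div 2" by (rule degree_On)
    moreover have "(m - 1) div 2 < n div 2" using mn False by presburger
    ultimately show ?thesis by simp
  qed
  have t2: "Lf g (s + 1) (On m a b c * hpoly (n div 2) (real (n div 2) + g + (s + 1) - 1) g) = 0"
    by (rule OG) (use gp sp dO in auto)
  have t3: "Lf (g + 1) s (On m a b c * hpoly (n div 2) (real (n div 2) + (g + 1) + s - 1) (g + 1)) = 0"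
    by (rule OG) (use gp sp dO in auto)
  show ?thesis using Lf_decomp[OF a b c, of n m] t1 t2 t3 unfolding g_def s_def by simp
qed

lemma Uq_sym: "Uq n m a b c = Uq m n a b c"
  unfolding Uq_def by (simp add: algebra_simps)

lemma Vq_sym: "Vq n m a b c = Vq m n a b c"
  unfolding Vq_def by (simp add: algebra_simps)

lemma Lf_orth:
  assumes a: "a > -1" and b: "b > -1" and c: "c^2 > 1" and mn: "m \<noteq> n"
  shows "Lf ((a + 1) / 2) ((b + 1) / 2) (Uq n m a b c + [:1, -(c + 1):] * Vq n m a b c) = 0"
proof (cases "m < n")
  case True then show ?thesis by (rule Lf_orth_lt[OF a b c])
next
  case False
  then have "n < m" using mn by simp
  from Lf_orth_lt[OF a b c this] show ?thesis by (simp add: Uq_sym Vq_sym)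
qed

lemma Lf_norm_even:
  assumes a: "a > -1" and b: "b > -1" and c: "c^2 > 1" and n: "n = 2 * N"
  shows "Lf ((a + 1) / 2) ((b + 1) / 2) (Uq n n a b c + [:1, -(c + 1):] * Vq n n a b c)
       = hcoef N (Ap n a b) ((a + 1) / 2) N * nv ((a + 1) / 2) ((b + 1) / 2) N"
proof -
  define g where "g = (a + 1) / 2"
  define s where "s = (b + 1) / 2"
  have gp: "g > 0" and sp: "s > 0" unfolding g_def s_def using a b by auto
  have d: "(n + 1) div 2 = N" "n div 2 = N" unfolding n by auto
  have cE: "coeff (En n a b c) N = hcoef N (Ap n a b) g N"
  proof -
    have "coeff (Qp n a b c) N = 0"
    proof (cases "N = 0")
      case True then show ?thesis using n by (simp add: Qp_0)
    next
      case False
      have "degree (Qp n a b c) \<le> (n - 1) div 2" by (rule degree_Qp)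
      moreover have "(n - 1) div 2 < N" using n False by presburger
      ultimately show ?thesis by (simp add: coeff_eq_0)
    qed
    then show ?thesis unfolding En_def Pp_def d g_def by (simp add: coeff_hpoly)
  qed
  have t1: "Lf g s (En n a b c * hpoly N (real N + g + s - 1) g) = hcoef N (Ap n a b) g N * nv g s N"
    using NG[OF gp sp, of "En n a b c" N] degree_En[of n a b c] unfolding cE d by simp
  have dO: "degree (On n a b c) < N \<or> On n a b c = 0"
  proof (cases "n = 0")
    case True then show ?thesis by (simp add: On_0)
  next
    case False
    have "degree (On n a b c) \<le> (n - 1) div 2" by (rule degree_On)
    moreover have "(n - 1) div 2 < N" using n False by presburger
    ultimately show ?thesis by simp
  qed
  have t2: "Lf g (s + 1) (On n a b c * hpoly N (real N + g + (s + 1) - 1) g) = 0"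
    by (rule OG) (use gp sp dO in auto)
  have t3: "Lf (g + 1) s (On n a b c * hpoly N (real N + (g + 1) + s - 1) (g + 1)) = 0"
    by (rule OG) (use gp sp dO in auto)
  show ?thesis using Lf_decomp[OF a b c, of n n] t1 t2 t3 unfolding g_def s_def d by simp
qed

lemma Lf_norm_odd:
  assumes a: "a > -1" and b: "b > -1" and c: "c^2 > 1" and n: "n = 2 * N + 1"
  shows "Lf ((a + 1) / 2) ((b + 1) / 2) (Uq n n a b c + [:1, -(c + 1):] * Vq n n a b c)
       = coeff (On n a b c) N * (nv ((a + 1) / 2) ((b + 1) / 2 + 1) N
           - c * kap n a b * nv ((a + 1) / 2 + 1) ((b + 1) / 2) N)"
proof -
  define g where "g = (a + 1) / 2"
  define s where "s = (b + 1) / 2"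
  have gp: "g > 0" and sp: "s > 0" unfolding g_def s_def using a b by auto
  have d: "(n + 1) div 2 = Suc N" "n div 2 = N" "(n - 1) div 2 = N" unfolding n by auto
  have t1: "Lf g s (En n a b c * hpoly (Suc N) (real (Suc N) + g + s - 1) g) = 0"
  proof (rule OG[OF gp sp])
    show "degree (En n a b c) < Suc N \<or> En n a b c = 0" using degree_En[of n a b c] d by simp
  qed
  have dO: "degree (On n a b c) \<le> N" using degree_On[of n a b c] d by simp
  have t2: "Lf g (s + 1) (On n a b c * hpoly N (real N + g + (s + 1) - 1) g) = coeff (On n a b c) N * nv g (s + 1) N"
    by (rule NG) (use gp sp dO in auto)
  have t3: "Lf (g + 1) s (On n a b c * hpoly N (real N + (g + 1) + s - 1) (g + 1)) = coeff (On n a b c) N * nv (g + 1) s N"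
    by (rule NG) (use gp sp dO in auto)
  show ?thesis using Lf_decomp[OF a b c, of n n] t1 t2 t3 unfolding g_def s_def d by (simp add: algebra_simps)
qed



lemma poch_G: "(x::real) > 0 \<Longrightarrow> pochhammer x N = Gamma (x + real N) / Gamma x"
  by (rule pochhammer_Gamma) (auto dest: nonpos_Ints_nonpos)

lemma Gp1: "(x::real) > 0 \<Longrightarrow> Gamma (x + 1) = x * Gamma x"
  by (rule Gamma_plus1) (auto dest: nonpos_Ints_nonpos)

lemma hcoef_diag: "hcoef N A B N = (-1)^N * pochhammer A N / pochhammer B N"
  unfolding hcoef_def by (simp add: pochhammer_same)

lemma val_even:
  assumes a: "a > -1" and b: "b > -1" and n: "n = 2 * N"
  shows "hcoef N (Ap n a b) ((a + 1) / 2) N * nv ((a + 1) / 2) ((b + 1) / 2) N = htilde n a b"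
proof -
  define g where "g = (a + 1) / 2"
  define s where "s = (b + 1) / 2"
  have gp: "g > 0" and sp: "s > 0" unfolding g_def s_def using a b by auto
  define G1 where "G1 = Gamma (g + real N)"
  define S1 where "S1 = Gamma (s + real N)"
  define Gg where "Gg = Gamma g"
  define Gs where "Gs = Gamma s"
  define T where "T = Gamma (g + real N + s)"
  define P where "P = pochhammer (real N + g + s) N"
  have pos: "G1 > 0" "S1 > 0" "Gg > 0" "Gs > 0" "T > 0" "P > 0"
    unfolding G1_def S1_def Gg_def Gs_def T_def P_def using gp sp by (auto intro!: pochhammer_pos)
  have A: "Ap n a b = real N + g + s" unfolding Ap_def n g_def s_def by simp
  have pg: "pochhammer g N = G1 / Gg" unfolding G1_def Gg_def by (rule poch_G[OF gp])
  have ps: "pochhammer s N = S1 / Gs" unfolding S1_def Gs_def by (simp add: poch_G[OF sp] add.commute)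
  have B: "Beta (g + real N) s = G1 * Gs / T" unfolding Beta_def G1_def Gs_def T_def ..
  have sq: "((-1::real)^N) * (-1)^N = 1" by (simp add: power_mult_distrib[symmetric])
  have lhs: "hcoef N (Ap n a b) g N * nv g s N = G1 * S1 * fact N * Gg^2 / (T * G1^2)"
    unfolding hcoef_diag nv_def A P_def[symmetric] pg ps B
    using pos sq by (simp add: field_simps power2_eq_square)
  have e1: "(real n + b + 1) / 2 = s + real N" unfolding n s_def by (simp add: field_simps)
  define q where "q = g + real N"
  have e2: "(real n + a + 3) / 2 = q + 1" unfolding n g_def q_def by (simp add: field_simps)
  have e3: "real n + a + 1 = 2 * q" unfolding n g_def q_def by (simp add: field_simps)
  have e4: "(real n + a + b + 2) / 2 = g + real N + s" unfolding n g_def s_def by (simp add: field_simps)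
  have e5: "n div 2 = N" unfolding n by simp
  have gN: "q > 0" unfolding q_def using gp by simp
  have G1q: "Gamma q = G1" unfolding q_def G1_def ..
  have ev: "even n" unfolding n by simp
  have rhs: "htilde n a b = G1 * S1 * fact N * Gg^2 / (T * G1^2)"
    unfolding htilde_def using ev
    apply (simp only: e1 e2 e3 e4 e5 g_def[symmetric] if_True)
    unfolding Gp1[OF gN] G1q pg S1_def[symmetric] T_def[symmetric]
    using pos gN by (simp add: field_simps power2_eq_square)
  show ?thesis using lhs rhs unfolding g_def s_def by simp
qed

lemma val_odd:
  assumes a: "a > -1" and b: "b > -1" and c: "c \<noteq> -1" and n: "n = 2 * N + 1"
  shows "coeff (On n a b c) N * (nv ((a + 1) / 2) ((b + 1) / 2 + 1) N
           - c * kap n a b * nv ((a + 1) / 2 + 1) ((b + 1) / 2) N) = htilde n a b"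
proof -
  define g where "g = (a + 1) / 2"
  define s where "s = (b + 1) / 2"
  have gp: "g > 0" and sp: "s > 0" unfolding g_def s_def using a b by auto
  have c1: "1 + c \<noteq> 0" using c by (metis add.commute add_eq_0_iff)
  define q where "q = g + real N"
  define r where "r = s + real N"
  define A where "A = q + s"
  have qp: "q > 0" and rp: "r > 0" and Ap': "A > 0" unfolding q_def r_def A_def using gp sp by auto
  define G1 where "G1 = Gamma q"
  define S1 where "S1 = Gamma r"
  define Gg where "Gg = Gamma g"
  define Gs where "Gs = Gamma s"
  define T where "T = Gamma A"
  define P where "P = pochhammer (A + 1) N"
  have pos: "G1 > 0" "S1 > 0" "Gg > 0" "Gs > 0" "T > 0" "P > 0"
    unfolding G1_def S1_def Gg_def Gs_def T_def P_def using gp sp qp rp Ap' by (auto intro!: pochhammer_pos)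
  have Aeq: "Ap n a b = A" unfolding Ap_def n g_def s_def A_def q_def by simp
  have odd: "odd n" unfolding n by simp
  have dN: "n div 2 = N" unfolding n by simp
  have cO: "coeff (On n a b c) N = A / (g * (1 + c)) * ((-1)^N * P / pochhammer (g + 1) N)"
    unfolding On_def Qp_def using odd unfolding dN Aeq g_def[symmetric]
    by (simp add: coeff_hpoly hcoef_diag P_def)
  have kp: "kap n a b = (g - A) / g" unfolding kap_def using odd unfolding Aeq g_def by simp
  have pg: "pochhammer g N = G1 / Gg" unfolding G1_def Gg_def q_def by (rule poch_G[OF gp])
  have pg1: "pochhammer (g + 1) N = q * G1 / (g * Gg)"
  proof -
    have "pochhammer (g + 1) N = Gamma (g + 1 + real N) / Gamma (g + 1)" using gp by (intro poch_G) simp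
    also have "g + 1 + real N = q + 1" unfolding q_def by simp
    finally show ?thesis unfolding Gp1[OF qp] Gp1[OF gp] G1_def Gg_def by simp
  qed
  have ps: "pochhammer s N = S1 / Gs" unfolding S1_def Gs_def r_def by (rule poch_G[OF sp])
  have ps1: "pochhammer (s + 1) N = r * S1 / (s * Gs)"
  proof -
    have "pochhammer (s + 1) N = Gamma (s + 1 + real N) / Gamma (s + 1)" using sp by (intro poch_G) simp
    also have "s + 1 + real N = r + 1" unfolding r_def by simp
    finally show ?thesis unfolding Gp1[OF rp] Gp1[OF sp] S1_def Gs_def by simp
  qed
  have B1: "Beta (g + real N) (s + 1) = G1 * (s * Gs) / (A * T)"
  proof -
    have "Beta (g + real N) (s + 1) = Gamma q * Gamma (s + 1) / Gamma (A + 1)"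
      unfolding Beta_def q_def A_def by (simp add: add_ac)
    then show ?thesis unfolding Gp1[OF sp] Gp1[OF Ap'] G1_def Gs_def T_def by simp
  qed
  have B2: "Beta (g + 1 + real N) s = q * G1 * Gs / (A * T)"
  proof -
    have "Beta (g + 1 + real N) s = Gamma (q + 1) * Gamma s / Gamma (A + 1)"
      unfolding Beta_def q_def A_def by (simp add: add_ac)
    then show ?thesis unfolding Gp1[OF qp] Gp1[OF Ap'] G1_def Gs_def T_def by simp
  qed
  have P1: "pochhammer (real N + g + (s + 1)) N = P" unfolding P_def A_def q_def by (simp add: add_ac)
  have P2: "pochhammer (real N + (g + 1) + s) N = P" unfolding P_def A_def q_def by (simp add: add_ac)
  have sq: "((-1::real)^N) * (-1)^N = 1" by (simp add: power_mult_distrib[symmetric])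
  have gA: "g - A = - r" unfolding A_def q_def r_def by simp
  define k where "k = 1 + c"
  have k0: "k \<noteq> 0" unfolding k_def using c1 .
  have ck: "c = k - 1" unfolding k_def by simp
  have lhs: "coeff (On n a b c) N * (nv g (s + 1) N - c * kap n a b * nv (g + 1) s N)
      = Gg^2 * S1 * fact N * r / (q * G1 * T)"
    unfolding cO kp nv_def B1 B2 P1 P2 pg pg1 ps ps1 gA k_def[symmetric]
    unfolding ck
    using pos gp sp qp rp Ap' k0 sq by (simp add: field_simps power2_eq_square)
  have e1: "real n + a + b + 1 = 2 * A" unfolding n A_def q_def g_def s_def by (simp add: field_simps)
  have e2: "(real n + b + 2) / 2 = r + 1" unfolding n r_def s_def by (simp add: field_simps)
  have e3: "(real n + a + 2) / 2 = q + 1" unfolding n q_def g_def by (simp add: field_simps)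
  have e4: "(real n + a + b + 3) / 2 = A + 1" unfolding n A_def q_def g_def s_def by (simp add: field_simps)
  have e5: "(n - 1) div 2 = N" "(n + 1) div 2 = Suc N" unfolding n by simp_all
  have pgS: "pochhammer g (Suc N) = G1 / Gg * q" unfolding pochhammer_Suc pg q_def ..
  have rhs: "htilde n a b = Gg^2 * S1 * fact N * r / (q * G1 * T)"
    unfolding htilde_def using odd
    apply (simp only: e1 e2 e3 e4 e5 g_def[symmetric] if_False)
    unfolding Gp1[OF rp] Gp1[OF qp] Gp1[OF Ap'] pgS G1_def[symmetric] S1_def[symmetric] T_def[symmetric]
    using pos qp rp Ap' by (simp add: field_simps power2_eq_square)
  show ?thesis using lhs rhs unfolding g_def s_def by simp
qed



lemma Lf_val:
  assumes a: "a > -1" and b: "b > -1" and c: "c^2 > 1"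
  shows "Lf ((a + 1) / 2) ((b + 1) / 2) (Uq n m a b c + [:1, -(c + 1):] * Vq n m a b c)
       = (if n = m then htilde n a b else 0)"
proof (cases "n = m")
  case False then show ?thesis using Lf_orth[OF a b c, of m n] by simp
next
  case True
  have c1: "c \<noteq> -1" using c by auto
  show ?thesis
  proof (cases "even n")
    case ev: True
    then obtain N where n: "n = 2 * N" by blast
    show ?thesis using True Lf_norm_even[OF a b c n] val_even[OF a b n] by simp
  next
    case od: False
    then obtain N where n: "n = 2 * N + 1" by (metis oddE)
    show ?thesis using True Lf_norm_odd[OF a b c n] val_odd[OF a b c1 n] by simp
  qed
qed

theorem univ_orth:
  fixes a b c :: real
  assumes a: "a > -1" and b: "b > -1" and c: "c^2 > 1"
  shows "(\<lambda>x. bigJ n x a b c * bigJ m x a b c * wtU a b c x) absolutely_integrable_on DomU c"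
    and "((\<lambda>x. bigJ n x a b c * bigJ m x a b c * wtU a b c x) has_integral
          (if n = m then sgn c * (c^2 - 1) powr ((a + b + 2) / 2) / (1 + c) * htilde n a b else 0)) (DomU c)"
proof -
  have c1: "c^2 - 1 > 0" using c by simp
  have cm: "1 + c \<noteq> 0" using c by (metis add.commute add_eq_0_iff one_power2 power2_minus less_irrefl)
  have feq: "(\<lambda>x. bigJ n x a b c * bigJ m x a b c * wtU a b c x)
      = (\<lambda>x. wtU a b c x * (poly (Uq n m a b c) ((x^2 - 1) / (c^2 - 1)) + x * poly (Vq n m a b c) ((x^2 - 1) / (c^2 - 1))))"
    by (rule ext, subst bigJ_prod[OF a c], simp add: zz_def mult.commute)
  show "(\<lambda>x. bigJ n x a b c * bigJ m x a b c * wtU a b c x) absolutely_integrable_on DomU c"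
    unfolding feq by (rule ana(1)[OF a b c])
  have val: "sgn c * (c^2 - 1) powr ((a + b) / 2) * (c - 1) * (if n = m then htilde n a b else 0)
      = (if n = m then sgn c * (c^2 - 1) powr ((a + b + 2) / 2) / (1 + c) * htilde n a b else 0)"
  proof -
    have "(c^2 - 1) powr ((a + b + 2) / 2) = (c^2 - 1) powr ((a + b) / 2) * (c^2 - 1) powr 1"
    proof -
      have "(a + b + 2) / 2 = (a + b) / 2 + 1" by (simp add: field_simps)
      then show ?thesis by (simp only: powr_add)
    qed
    also have "\<dots> = (c^2 - 1) powr ((a + b) / 2) * ((c - 1) * (1 + c))"
      using c1 by (simp add: power2_eq_square algebra_simps)
    finally show ?thesis using cm by simp
  qed
  show "((\<lambda>x. bigJ n x a b c * bigJ m x a b c * wtU a b c x) has_integral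
          (if n = m then sgn c * (c^2 - 1) powr ((a + b + 2) / 2) / (1 + c) * htilde n a b else 0)) (DomU c)"
    unfolding feq val[symmetric] Lf_val[OF a b c, symmetric] by (rule ana(2)[OF a b c])
qed



lemma DomU_char: "DomU c = {t. 1 \<le> \<bar>t\<bar> \<and> \<bar>t\<bar> \<le> \<bar>c\<bar>}"
  unfolding DomU_def by auto

lemma Dx_char: "Dx \<delta> y = {x. \<bar>y\<bar> \<le> \<bar>x\<bar> \<and> \<bar>x\<bar> \<le> \<bar>\<delta>\<bar>}"
  unfolding Dx_def by auto

lemma Dy_char: "Dy \<delta> = {y. 1 \<le> \<bar>y\<bar> \<and> \<bar>y\<bar> \<le> \<bar>\<delta>\<bar>}"
  unfolding Dy_def by auto

lemma image_scale:
  fixes y \<delta> :: real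
  assumes y: "y \<noteq> 0"
  shows "(\<lambda>t. y * t) ` DomU (\<delta> / y) = Dx \<delta> y"
proof (intro equalityI subsetI)
  fix x assume "x \<in> (\<lambda>t. y * t) ` DomU (\<delta> / y)"
  then obtain t where t: "1 \<le> \<bar>t\<bar>" "\<bar>t\<bar> \<le> \<bar>\<delta> / y\<bar>" and x: "x = y * t" unfolding DomU_char by auto
  have ay: "\<bar>y\<bar> > 0" using y by simp
  have "\<bar>y\<bar> * 1 \<le> \<bar>y\<bar> * \<bar>t\<bar>" using t ay by (intro mult_left_mono) auto
  moreover have "\<bar>y\<bar> * \<bar>t\<bar> \<le> \<bar>y\<bar> * \<bar>\<delta> / y\<bar>" using t ay by (intro mult_left_mono) auto
  ultimately show "x \<in> Dx \<delta> y" unfolding Dx_char x using y by (simp add: abs_mult abs_divide)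
next
  fix x assume "x \<in> Dx \<delta> y"
  then have x: "\<bar>y\<bar> \<le> \<bar>x\<bar>" "\<bar>x\<bar> \<le> \<bar>\<delta>\<bar>" unfolding Dx_char by auto
  have ay: "\<bar>y\<bar> > 0" using y by simp
  have "x / y \<in> DomU (\<delta> / y)" unfolding DomU_char using x ay
    by (simp add: abs_divide divide_right_mono le_divide_eq_1)
  moreover have "x = y * (x / y)" using y by simp
  ultimately show "x \<in> (\<lambda>t. y * t) ` DomU (\<delta> / y)" by blast
qed

lemma weightW_scale:
  fixes y t :: real
  assumes y: "y \<noteq> 0"
  shows "weightW \<alpha> \<beta> \<gamma> \<delta> (y * t) y
       = sgn y * \<bar>y\<bar> powr (\<gamma> + \<beta>) * (1 + y) * (y^2 - 1) powr ((\<alpha> - 1) / 2) * wtU \<gamma> \<beta> (\<delta> / y) t"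
proof -
  have e1: "(y * t)^2 / y^2 - 1 = t^2 - 1" using y by (simp add: power_mult_distrib)
  have e2: "(\<delta>^2 - (y * t)^2) / y^2 = (\<delta> / y)^2 - t^2" using y by (simp add: power_mult_distrib field_simps)
  have e3: "(\<delta> - y * t) / y = \<delta> / y - t" using y by (simp add: field_simps)
  have e4: "sgn (\<delta> * (y * t) * y) = sgn y * sgn (\<delta> / y * t)"
    using y by (simp add: sgn_mult sgn_divide)
  show ?thesis unfolding weightW_def wtU_def e1 e2 e3 e4 using y by (simp add: mult_ac)
qed

lemma bigJ2_scale:
  assumes y: "y \<noteq> 0"
  shows "bigJ2 \<alpha> \<beta> \<gamma> \<delta> n k (y * t) y
       = bigJ (n - k) y \<alpha> (2 * real k + \<beta> + \<gamma> + 1) ((-1) ^ k * \<delta>) * rho \<delta> k y * bigJ k t \<gamma> \<beta> (\<delta> / y)"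
  unfolding bigJ2_def using y by simp

lemma inner:
  fixes \<alpha> \<beta> \<gamma> \<delta> y :: real and n k m l :: nat
  assumes b: "\<beta> > -1" and g: "\<gamma> > -1" and y: "y \<noteq> 0" and c: "(\<delta> / y)^2 > 1"
  defines "Cy \<equiv> bigJ (n - k) y \<alpha> (2 * real k + \<beta> + \<gamma> + 1) ((-1) ^ k * \<delta>) * rho \<delta> k y
              * (bigJ (m - l) y \<alpha> (2 * real l + \<beta> + \<gamma> + 1) ((-1) ^ l * \<delta>) * rho \<delta> l y)
              * (sgn y * \<bar>y\<bar> powr (\<gamma> + \<beta>) * (1 + y) * (y^2 - 1) powr ((\<alpha> - 1) / 2))"
  defines "f \<equiv> \<lambda>x. bigJ2 \<alpha> \<beta> \<gamma> \<delta> n k x y * bigJ2 \<alpha> \<beta> \<gamma> \<delta> m l x y * weightW \<alpha> \<beta> \<gamma> \<delta> x y"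
  shows "f absolutely_integrable_on Dx \<delta> y"
    and "integral (Dx \<delta> y) f = \<bar>y\<bar> * Cy * (if k = l then sgn (\<delta> / y) * ((\<delta> / y)^2 - 1) powr ((\<gamma> + \<beta> + 2) / 2) / (1 + \<delta> / y) * htilde k \<gamma> \<beta> else 0)"
proof -
  define cc where "cc = \<delta> / y"
  define F where "F t = bigJ k t \<gamma> \<beta> cc * bigJ l t \<gamma> \<beta> cc * wtU \<gamma> \<beta> cc t" for t
  define V where "V = (if k = l then sgn cc * (cc^2 - 1) powr ((\<gamma> + \<beta> + 2) / 2) / (1 + cc) * htilde k \<gamma> \<beta> else 0)"
  have c': "cc^2 > 1" unfolding cc_def using c .
  have Fa: "F absolutely_integrable_on DomU cc" unfolding F_def by (rule univ_orth(1)[OF g b c'])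
  have Fi: "(F has_integral V) (DomU cc)" unfolding F_def V_def by (rule univ_orth(2)[OF g b c'])
  have fyt: "\<bar>y\<bar> * f (y * t) = (\<bar>y\<bar> * Cy) * F t" for t
    unfolding f_def F_def Cy_def bigJ2_scale[OF y] weightW_scale[OF y] cc_def by (simp add: mult_ac)
  have ai: "(\<lambda>t. \<bar>y\<bar> * f (y * t)) absolutely_integrable_on DomU cc"
    unfolding fyt using absolutely_integrable_scaleR_left[OF Fa, where c = "\<bar>y\<bar> * Cy"] by simp
  have Fint: "integral (DomU cc) F = V" using Fi by (rule integral_unique)
  have iv: "integral (DomU cc) (\<lambda>t. \<bar>y\<bar> * f (y * t)) = \<bar>y\<bar> * Cy * V"
    unfolding fyt using Fint by simp
  have meas: "DomU cc \<in> sets lebesgue" unfolding DomU_def by simp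
  have der: "((\<lambda>t. y * t) has_field_derivative y) (at t within DomU cc)" for t
    by (auto intro!: derivative_eq_intros)
  have inj: "inj_on (\<lambda>t. y * t) (DomU cc)" using y by (auto intro: inj_onI)
  have "f absolutely_integrable_on (\<lambda>t. y * t) ` DomU cc \<and> integral ((\<lambda>t. y * t) ` DomU cc) f = \<bar>y\<bar> * Cy * V"
    using has_absolute_integral_change_of_variables_1'[OF meas der inj, of f "\<bar>y\<bar> * Cy * V"] ai iv by simp
  then show "f absolutely_integrable_on Dx \<delta> y"
    and "integral (Dx \<delta> y) f = \<bar>y\<bar> * Cy * (if k = l then sgn (\<delta> / y) * ((\<delta> / y)^2 - 1) powr ((\<gamma> + \<beta> + 2) / 2) / (1 + \<delta> / y) * htilde k \<gamma> \<beta> else 0)"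
    unfolding cc_def image_scale[OF y] V_def by auto
qed

lemma rho_sq:
  fixes y \<delta> :: real
  assumes y: "y \<noteq> 0"
  shows "rho \<delta> k y * rho \<delta> k y = (if even k then (\<delta>^2 - y^2) ^ k else (\<delta>^2 - y^2) ^ (k - 1) * (y + \<delta>)^2)"
proof (cases "even k")
  case True
  then obtain j where k: "k = 2 * j" by blast
  have "rho \<delta> k y * rho \<delta> k y = (y^2 * (1 - \<delta>^2 / y^2)) ^ (2 * j)"
    unfolding rho_def k by (simp add: power_mult_distrib power_mult[symmetric] power2_eq_square mult_ac power_add[symmetric] mult_2_right)
  also have "y^2 * (1 - \<delta>^2 / y^2) = - (\<delta>^2 - y^2)" using y by (simp add: field_simps)
  also have "(- (\<delta>^2 - y^2)) ^ (2 * j) = (\<delta>^2 - y^2) ^ (2 * j)" by (simp add: power_mult power2_commute)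
  finally show ?thesis using True k by simp
next
  case False
  then obtain j where k: "k = 2 * j + 1" by (metis oddE)
  have "rho \<delta> k y * rho \<delta> k y = (y^2 * (1 - \<delta>^2 / y^2)) ^ (2 * j) * (y * (1 + \<delta> / y))^2"
    unfolding rho_def k by (simp add: power_mult_distrib power_mult[symmetric] power2_eq_square mult_ac power_add[symmetric] mult_2_right)
  also have "y^2 * (1 - \<delta>^2 / y^2) = - (\<delta>^2 - y^2)" using y by (simp add: field_simps)
  also have "(- (\<delta>^2 - y^2)) ^ (2 * j) = (\<delta>^2 - y^2) ^ (2 * j)" by (simp add: power_mult power2_commute)
  also have "y * (1 + \<delta> / y) = y + \<delta>" using y by (simp add: field_simps)
  finally show ?thesis using False k by simp
qed

lemma alg_even:
  fixes y w Q sy ay Dk Y sd R D :: real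
  assumes "y \<noteq> 0" "w \<noteq> 0" "Q \<noteq> 0" "sy = 1 \<or> sy = -1" "ay = sy * y"
  shows "ay * (Dk * (sy * Q * (1 + y) * Y)) * (sd * sy * (R * D / (Q * y^2)) / (w / y))
       = sd * sy * (1 + y) * (D / w) * (Y * (Dk * R))"
  using assms by (auto simp: field_simps power2_eq_square)

lemma alg_odd:
  fixes y w Q sy ay Dj Y sd R D :: real
  assumes "y \<noteq> 0" "w \<noteq> 0" "Q \<noteq> 0" "sy = 1 \<or> sy = -1" "ay = sy * y"
  shows "ay * (Dj * w^2 * (sy * Q * (1 + y) * Y)) * (sd * sy * (R * D / (Q * y^2)) / (w / y))
       = sd * sy * (1 + y) * w * (Y * (D * Dj * R))"
  using assms by (auto simp: field_simps power2_eq_square)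

lemma outer_id:
  fixes y \<delta> \<alpha> \<beta> \<gamma> :: real
  assumes y: "y \<noteq> 0" and yd: "\<bar>y\<bar> < \<bar>\<delta>\<bar>"
  shows "\<bar>y\<bar> * (rho \<delta> k y * rho \<delta> k y * (sgn y * \<bar>y\<bar> powr (\<gamma> + \<beta>) * (1 + y) * (y^2 - 1) powr ((\<alpha> - 1) / 2)))
         * (sgn (\<delta> / y) * ((\<delta> / y)^2 - 1) powr ((\<gamma> + \<beta> + 2) / 2) / (1 + \<delta> / y))
       = wtU \<alpha> (2 * real k + \<beta> + \<gamma> + 1) ((-1) ^ k * \<delta>) y"
proof -
  define D where "D = \<delta>^2 - y^2"
  have "\<bar>y\<bar>^2 < \<bar>\<delta>\<bar>^2" by (rule power_strict_mono) (use yd in auto)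
  then have Dp: "D > 0" unfolding D_def by simp
  have yd0: "y + \<delta> \<noteq> 0" using yd by auto
  define Q where "Q = \<bar>y\<bar> powr (\<gamma> + \<beta>)"
  define R where "R = D powr ((\<gamma> + \<beta>) / 2)"
  define Y where "Y = (y^2 - 1) powr ((\<alpha> - 1) / 2)"
  have Qp: "Q > 0" unfolding Q_def using y by simp
  have p1: "((\<delta> / y)^2 - 1) powr ((\<gamma> + \<beta> + 2) / 2) = R * D / (Q * y^2)"
  proof -
    have "(\<delta> / y)^2 - 1 = D / y^2" unfolding D_def using y by (simp add: field_simps)
    then have "((\<delta> / y)^2 - 1) powr ((\<gamma> + \<beta> + 2) / 2) = D powr ((\<gamma> + \<beta> + 2) / 2) / (y^2) powr ((\<gamma> + \<beta> + 2) / 2)"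
      by (simp add: powr_divide)
    also have "D powr ((\<gamma> + \<beta> + 2) / 2) = R * D"
    proof -
      have e: "(\<gamma> + \<beta> + 2) / 2 = (\<gamma> + \<beta>) / 2 + 1" by simp
      show ?thesis unfolding R_def e powr_add using Dp by simp
    qed
    also have "(y^2) powr ((\<gamma> + \<beta> + 2) / 2) = Q * y^2"
    proof -
      have yy: "y^2 = \<bar>y\<bar> powr 2" using y by (simp add: powr_realpow[symmetric])
      have "(y^2) powr ((\<gamma> + \<beta> + 2) / 2) = (\<bar>y\<bar> powr 2) powr ((\<gamma> + \<beta> + 2) / 2)"
        by (simp only: yy)
      also have "\<dots> = \<bar>y\<bar> powr ((\<gamma> + \<beta>) + 2)" unfolding powr_powr
        by (rule arg_cong[where f = "\<lambda>e. \<bar>y\<bar> powr e"]) (simp add: field_simps)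
      finally have "(y^2) powr ((\<gamma> + \<beta> + 2) / 2) = \<bar>y\<bar> powr ((\<gamma> + \<beta>) + 2)" .
      also have "\<dots> = Q * \<bar>y\<bar> powr 2" unfolding Q_def by (rule powr_add)
      also have "\<bar>y\<bar> powr 2 = y^2" using y by (simp add: powr_realpow[symmetric])
      finally show ?thesis .
    qed
    finally show ?thesis .
  qed
  have p2: "wtU \<alpha> (2 * real k + \<beta> + \<gamma> + 1) ((-1) ^ k * \<delta>) y
      = sgn ((-1) ^ k * \<delta> * y) * (1 + y) * ((-1) ^ k * \<delta> - y) * (Y * (D ^ k * R))"
  proof -
    have c2: "((-1) ^ k * \<delta>)^2 - y^2 = D" unfolding D_def by (simp add: power_mult_distrib power_even_eq[symmetric] power_mult[symmetric])
    have ee: "(2 * real k + \<beta> + \<gamma> + 1 - 1) / 2 = real k + (\<gamma> + \<beta>) / 2" by simp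
    have "D powr ((2 * real k + \<beta> + \<gamma> + 1 - 1) / 2) = D ^ k * R"
      unfolding R_def ee powr_add using Dp by (simp add: powr_realpow)
    then show ?thesis unfolding wtU_def c2 Y_def by simp
  qed
  have sg: "sgn (\<delta> / y) = sgn \<delta> * sgn y" by (simp add: sgn_divide)
  have sq: "sgn y = 1 \<or> sgn y = -1" using y by (simp add: sgn_if)
  have ay: "\<bar>y\<bar> = sgn y * y" by (simp add: abs_sgn mult.commute)
  have d1: "1 + \<delta> / y = (y + \<delta>) / y" using y by (simp add: field_simps)
  have Dw: "D / (y + \<delta>) = \<delta> - y" unfolding D_def using yd0 by (simp add: field_simps power2_eq_square)
  have sgdy: "sgn (\<delta> * y) = sgn \<delta> * sgn y" by (simp add: sgn_mult)
  show ?thesis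
  proof (cases "even k")
    case True
    have rs: "rho \<delta> k y * rho \<delta> k y = D ^ k" unfolding rho_sq[OF y] D_def using True by simp
    show ?thesis unfolding p1 p2 sg d1 rs Q_def[symmetric] Y_def[symmetric]
      unfolding alg_even[OF y yd0 Qp[THEN less_imp_neq, symmetric] sq ay] Dw
      using True by (simp add: sgdy)
  next
    case False
    then obtain j where k: "k = Suc j" by (cases k) auto
    have rs: "rho \<delta> k y * rho \<delta> k y = D ^ j * (y + \<delta>)^2" unfolding rho_sq[OF y] D_def using False k by simp
    have "sgn \<delta> * sgn y * (1 + y) * (y + \<delta>) * (Y * (D * D ^ j * R))
        = sgn ((-1) ^ k * \<delta> * y) * (1 + y) * ((-1) ^ k * \<delta> - y) * (Y * (D ^ k * R))"
      using False k by (simp add: sgn_mult algebra_simps)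
    then show ?thesis unfolding p1 p2 sg d1 rs Q_def[symmetric] Y_def[symmetric]
      unfolding alg_odd[OF y yd0 Qp[THEN less_imp_neq, symmetric] sq ay] by simp
  qed
qed



lemma Dx_boundary:
  assumes "\<bar>y\<bar> = \<bar>\<delta>\<bar>"
  shows "Dx \<delta> y = {- \<bar>\<delta>\<bar>, \<bar>\<delta>\<bar>}"
  unfolding Dx_def using assms by auto

theorem proposition2p2:
  fixes \<alpha> \<beta> \<gamma> \<delta> :: real and n k m l :: nat
  assumes "\<alpha> > -1" and "\<beta> > -1" and "\<gamma> > -1" and "\<bar>\<delta>\<bar> > 1"
    and "k \<le> n" and "l \<le> m"
  shows "(\<forall>y \<in> Dy \<delta>. (\<lambda>x. bigJ2 \<alpha> \<beta> \<gamma> \<delta> n k x y * bigJ2 \<alpha> \<beta> \<gamma> \<delta> m l x y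
                           * weightW \<alpha> \<beta> \<gamma> \<delta> x y) integrable_on Dx \<delta> y)
     \<and> ((\<lambda>y. integral (Dx \<delta> y) (\<lambda>x. bigJ2 \<alpha> \<beta> \<gamma> \<delta> n k x y * bigJ2 \<alpha> \<beta> \<gamma> \<delta> m l x y
                                         * weightW \<alpha> \<beta> \<gamma> \<delta> x y))
         has_integral (if k = l \<and> n = m then Htilde \<alpha> \<beta> \<gamma> \<delta> n k else 0)) (Dy \<delta>)"
proof -
  note al = assms(1) and be = assms(2) and ga = assms(3) and de = assms(4) and kn = assms(5) and lm = assms(6)
  define f where "f y = (\<lambda>x. bigJ2 \<alpha> \<beta> \<gamma> \<delta> n k x y * bigJ2 \<alpha> \<beta> \<gamma> \<delta> m l x y * weightW \<alpha> \<beta> \<gamma> \<delta> x y)" for y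
  have interior: "y \<noteq> 0" "(\<delta> / y)^2 > 1" if "y \<in> Dy \<delta>" "\<bar>y\<bar> \<noteq> \<bar>\<delta>\<bar>" for y
  proof -
    from that have y1: "1 \<le> \<bar>y\<bar>" and yd: "\<bar>y\<bar> < \<bar>\<delta>\<bar>" unfolding Dy_char by auto
    show "y \<noteq> 0" using y1 by auto
    have "\<bar>\<delta> / y\<bar> > 1" using y1 yd by (simp add: abs_divide)
    then have "\<bar>\<delta> / y\<bar>^2 > 1^2" by (rule power_strict_mono) auto
    then show "(\<delta> / y)^2 > 1" by (simp only: power2_abs power_one)
  qed
  have part1: "\<forall>y \<in> Dy \<delta>. f y integrable_on Dx \<delta> y"
  proof
    fix y assume y: "y \<in> Dy \<delta>"
    show "f y integrable_on Dx \<delta> y"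
    proof (cases "\<bar>y\<bar> = \<bar>\<delta>\<bar>")
      case True
      then show ?thesis unfolding Dx_boundary[OF True] by (intro integrable_negligible) auto
    next
      case False
      from inner(1)[OF be ga interior[OF y False], of \<alpha> n k m l]
      show ?thesis unfolding f_def absolutely_integrable_on_def by blast
    qed
  qed
  define b' where "b' = 2 * real k + \<beta> + \<gamma> + 1"
  define c' where "c' = (-1) ^ k * \<delta>"
  define G where "G y = (if k = l then htilde k \<gamma> \<beta> * (bigJ (n - k) y \<alpha> b' c' * bigJ (m - k) y \<alpha> b' c' * wtU \<alpha> b' c' y) else 0)" for y
  have c'sq: "c'^2 = \<delta>^2" unfolding c'_def by (simp add: power_mult_distrib power_even_eq[symmetric] power_mult[symmetric])
  have c'2: "c'^2 > 1" unfolding c'sq using de by (metis abs_le_square_iff abs_one not_le one_power2 order.strict_iff_not)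
  have b'1: "b' > -1" unfolding b'_def using be ga by simp
  have absc: "\<bar>c'\<bar> = \<bar>\<delta>\<bar>" unfolding c'_def by (simp add: abs_mult)
  have DyU: "DomU c' = Dy \<delta>" unfolding DomU_def Dy_def absc ..
  have sgc: "sgn c' = (-1) ^ k * sgn \<delta>" unfolding c'_def by (cases "even k") (simp_all add: sgn_mult)
  have Gint: "(G has_integral (if k = l \<and> n = m then Htilde \<alpha> \<beta> \<gamma> \<delta> n k else 0)) (Dy \<delta>)"
  proof (cases "k = l")
    case False
    then show ?thesis unfolding G_def by simp
  next
    case True
    have u: "((\<lambda>y. bigJ (n - k) y \<alpha> b' c' * bigJ (m - k) y \<alpha> b' c' * wtU \<alpha> b' c' y) has_integral
          (if n - k = m - k then sgn c' * (c'^2 - 1) powr ((\<alpha> + b' + 2) / 2) / (1 + c') * htilde (n - k) \<alpha> b' else 0)) (Dy \<delta>)"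
      using univ_orth(2)[OF al b'1 c'2, of "n - k" "m - k"] unfolding DyU .
    have nm: "(n - k = m - k) = (n = m)" using kn lm True by auto
    have ex: "(\<alpha> + b' + 2) / 2 = (2 * real k + \<alpha> + \<beta> + \<gamma> + 3) / 2" unfolding b'_def by simp
    have val: "htilde k \<gamma> \<beta> * (if n - k = m - k then sgn c' * (c'^2 - 1) powr ((\<alpha> + b' + 2) / 2) / (1 + c') * htilde (n - k) \<alpha> b' else 0)
        = (if k = l \<and> n = m then Htilde \<alpha> \<beta> \<gamma> \<delta> n k else 0)"
      unfolding nm ex c'sq sgc using True unfolding Htilde_def b'_def c'_def by (simp add: mult_ac)
    show ?thesis using has_integral_mult_right[OF u, of "htilde k \<gamma> \<beta>"] True unfolding G_def val[symmetric] by simp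
  qed
  have eqG: "integral (Dx \<delta> y) (f y) = G y" if "y \<in> Dy \<delta> - {- \<bar>\<delta>\<bar>, \<bar>\<delta>\<bar>}" for y
  proof -
    have y: "y \<in> Dy \<delta>" and nb: "\<bar>y\<bar> \<noteq> \<bar>\<delta>\<bar>" using that by (auto simp: abs_if split: if_splits)
    have y0: "y \<noteq> 0" and c: "(\<delta> / y)^2 > 1" using interior[OF y nb] by auto
    have yd: "\<bar>y\<bar> < \<bar>\<delta>\<bar>" using y nb unfolding Dy_char by auto
    have I: "integral (Dx \<delta> y) (f y) = \<bar>y\<bar> * (bigJ (n - k) y \<alpha> (2 * real k + \<beta> + \<gamma> + 1) ((-1) ^ k * \<delta>) * rho \<delta> k y
              * (bigJ (m - l) y \<alpha> (2 * real l + \<beta> + \<gamma> + 1) ((-1) ^ l * \<delta>) * rho \<delta> l y)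
              * (sgn y * \<bar>y\<bar> powr (\<gamma> + \<beta>) * (1 + y) * (y^2 - 1) powr ((\<alpha> - 1) / 2)))
           * (if k = l then sgn (\<delta> / y) * ((\<delta> / y)^2 - 1) powr ((\<gamma> + \<beta> + 2) / 2) / (1 + \<delta> / y) * htilde k \<gamma> \<beta> else 0)"
      unfolding f_def by (rule inner(2)[OF be ga y0 c])
    show ?thesis
    proof (cases "k = l")
      case False then show ?thesis unfolding I G_def by simp
    next
      case True
      have o: "\<bar>y\<bar> * (rho \<delta> k y * rho \<delta> k y * (sgn y * \<bar>y\<bar> powr (\<gamma> + \<beta>) * (1 + y) * (y^2 - 1) powr ((\<alpha> - 1) / 2)))
         * (sgn (\<delta> / y) * ((\<delta> / y)^2 - 1) powr ((\<gamma> + \<beta> + 2) / 2) / (1 + \<delta> / y))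
       = wtU \<alpha> b' c' y" unfolding b'_def c'_def by (rule outer_id[OF y0 yd])
      show ?thesis unfolding I G_def using True o[symmetric] unfolding b'_def c'_def
        by (simp add: mult_ac)
    qed
  qed
  have part2: "((\<lambda>y. integral (Dx \<delta> y) (f y)) has_integral (if k = l \<and> n = m then Htilde \<alpha> \<beta> \<gamma> \<delta> n k else 0)) (Dy \<delta>)"
    by (rule has_integral_spike_finite[OF _ _ Gint, of "{- \<bar>\<delta>\<bar>, \<bar>\<delta>\<bar>}"]) (auto simp: eqG)
  show ?thesis using part1 part2 unfolding f_def by simp
qed


end
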